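(* Let $t \geq 1$, $W \geq 2$ and $R \geq 2$. Then there is no fast write (W1R2) implementation of a multi-writer multi-reader atomic register in the message-passing client–server model described in the context, i.e., no wait-free implementation tolerating the crash of up to $t$ of the $S$ servers in which every write operation completes after one round-trip of communication and every read operation completes after (at most) two round-trips of communication.
   Context: System model: there are three disjoint sets of processes: a set of $S \geq 2$ servers $\{s_1,\dots,s_S\}$, a set of $R$ readers $\{r_1,\dots,r_R\}$ and a set of $W$ writers $\{w_1,\dots,w_W\}$ (readers and writers are called clients). Clients and servers communicate by asynchronous message passing over bidirectional reliable channels; there is no communication between servers and no communication between clients. In any execution, any number of clients and up to $t$ of the $S$ servers may crash. An implementation is wait-free: every invoked read or write operation of a non-crashed client eventually returns regardless of the status of other clients. Only writers invoke $write(v)$ and only readers invoke $read()$, which returns a value. A round-trip of communication is one phase in which the client sends a message to all servers (to query or update them) and waits for replies; since up to $t$ servers may crash, a client can only wait for replies from $S-t$ servers. A W1R2 implementation is one in which every write uses exactly one round-trip and every read uses two round-trips. Atomicity: an execution is a sequence of invocation and response events with distinct global timestamps; $O_1 \prec_\sigma O_2$ if the response of $O_1$ occurs before the invocation of $O_2$. An execution is well-formed if each client's subsequence is sequential (each invocation immediately followed by its matching response). The register is atomic if for every well-formed execution $\sigma$ there is a sequential permutation $\pi$ of all its operations such that (i) if $O_1 \prec_\sigma O_2$ then $O_1$ appears before $O_2$ in $\pi$, and (ii) each read returns the value written by the latest preceding write in $\pi$. *)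

theory Defs
  imports Main
begin

text \<open>Servers are 0..S-1, writers are Wr i (i < W), readers are Rd j (j < R).
 Register values are natural numbers; the initial value of the register is 0.\<close>

datatype client = Wr nat | Rd nat

datatype phase = Idle | WPh nat | RPh1 | RPh2

datatype event = InvW client nat | InvR client | RespW client | RespR client nat

text \<open>A W1R2 implementation (protocol). Type parameters: 'c client local state,
 's server local state, 'm messages. Everything is deterministic and arbitrary.\<close>
record ('c, 's, 'm) proto =
  srv_init :: "nat \<Rightarrow> 's"
  srv_step :: "nat \<Rightarrow> 's \<Rightarrow> client \<Rightarrow> 'm \<Rightarrow> 's \<times> 'm"
     \<comment> \<open>server j, its state, sender, message \<mapsto> new state, reply\<close>
  cl_init  :: "client \<Rightarrow> 'c"
  w_req    :: "client \<Rightarrow> 'c \<Rightarrow> nat \<Rightarrow> nat \<Rightarrow> 'm"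
     \<comment> \<open>write(v): message sent to server j\<close>
  w_done   :: "client \<Rightarrow> 'c \<Rightarrow> nat \<Rightarrow> (nat \<rightharpoonup> 'm) \<Rightarrow> 'c"
  r_req1   :: "client \<Rightarrow> 'c \<Rightarrow> nat \<Rightarrow> 'm"
  r_mid    :: "client \<Rightarrow> 'c \<Rightarrow> (nat \<rightharpoonup> 'm) \<Rightarrow> 'c"
  r_req2   :: "client \<Rightarrow> 'c \<Rightarrow> nat \<Rightarrow> 'm"
  r_done   :: "client \<Rightarrow> 'c \<Rightarrow> (nat \<rightharpoonup> 'm) \<Rightarrow> 'c \<times> nat"
  cl_late  :: "client \<Rightarrow> 'c \<Rightarrow> nat \<Rightarrow> 'm \<Rightarrow> 'c"
     \<comment> \<open>local processing of a reply that is not used by the current round trip\<close>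

record ('c, 's, 'm) conf =
  sst  :: "nat \<Rightarrow> 's"
  cst  :: "client \<Rightarrow> 'c"
  ph   :: "client \<Rightarrow> phase"
  opn  :: "client \<Rightarrow> nat"
  reqs :: "(client \<times> nat \<times> nat \<times> nat \<times> 'm) set"  \<comment> \<open>(from, to server, op no, round, msg)\<close>
  reps :: "(nat \<times> client \<times> nat \<times> nat \<times> 'm) set"  \<comment> \<open>(from server, to, op no, round, msg)\<close>
  got  :: "client \<Rightarrow> nat \<rightharpoonup> 'm"

definition init_conf :: "('c, 's, 'm) proto \<Rightarrow> ('c, 's, 'm) conf" where
  "init_conf P = \<lparr> sst = srv_init P, cst = cl_init P, ph = (\<lambda>_. Idle), opn = (\<lambda>_. 0),
                   reqs = {}, reps = {}, got = (\<lambda>_. Map.empty) \<rparr>"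

fun round_of :: "phase \<Rightarrow> nat" where
  "round_of Idle = 0"
| "round_of (WPh _) = 1"
| "round_of RPh1 = 1"
| "round_of RPh2 = 2"

text \<open>Asynchrony: any enabled step may be taken at any time;
 messages may stay in transit forever (covering crashes of clients and of servers in
 finite executions).\<close>
inductive reach :: "nat \<Rightarrow> nat \<Rightarrow> nat \<Rightarrow> nat \<Rightarrow> ('c, 's, 'm) proto
                     \<Rightarrow> ('c, 's, 'm) conf \<Rightarrow> event list \<Rightarrow> bool"
  for S t W R :: nat and P :: "('c, 's, 'm) proto" where
  init: "reach S t W R P (init_conf P) []"
| inv_w: "\<lbrakk> reach S t W R P C h; i < W; ph C (Wr i) = Idle \<rbrakk> \<Longrightarrow>
     reach S t W R P
       (C\<lparr> ph := (ph C)(Wr i := WPh v), opn := (opn C)(Wr i := Suc (opn C (Wr i))),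
           got := (got C)(Wr i := Map.empty),
           reqs := reqs C \<union> {(Wr i, j, Suc (opn C (Wr i)), 1, w_req P (Wr i) (cst C (Wr i)) v j) | j. j < S} \<rparr>)
       (h @ [InvW (Wr i) v])"
| inv_r: "\<lbrakk> reach S t W R P C h; i < R; ph C (Rd i) = Idle \<rbrakk> \<Longrightarrow>
     reach S t W R P
       (C\<lparr> ph := (ph C)(Rd i := RPh1), opn := (opn C)(Rd i := Suc (opn C (Rd i))),
           got := (got C)(Rd i := Map.empty),
           reqs := reqs C \<union> {(Rd i, j, Suc (opn C (Rd i)), 1, r_req1 P (Rd i) (cst C (Rd i)) j) | j. j < S} \<rparr>)
       (h @ [InvR (Rd i)])"
| deliver: "\<lbrakk> reach S t W R P C h; (c, j, k, r, m) \<in> reqs C;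
              srv_step P j (sst C j) c m = (s', m') \<rbrakk> \<Longrightarrow>
     reach S t W R P
       (C\<lparr> sst := (sst C)(j := s'), reqs := reqs C - {(c, j, k, r, m)},
           reps := reps C \<union> {(j, c, k, r, m')} \<rparr>) h"
| recv: "\<lbrakk> reach S t W R P C h; (j, c, k, r, m) \<in> reps C; k = opn C c; ph C c \<noteq> Idle;
           r = round_of (ph C c); card (dom (got C c)) < S - t \<rbrakk> \<Longrightarrow>
     reach S t W R P
       (C\<lparr> reps := reps C - {(j, c, k, r, m)}, got := (got C)(c := (got C c)(j \<mapsto> m)) \<rparr>) h"
| recv_late: "\<lbrakk> reach S t W R P C h; (j, c, k, r, m) \<in> reps C;
           \<not> (k = opn C c \<and> ph C c \<noteq> Idle \<and> r = round_of (ph C c) \<and> card (dom (got C c)) < S - t) \<rbrakk> \<Longrightarrow>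
     reach S t W R P
       (C\<lparr> reps := reps C - {(j, c, k, r, m)}, cst := (cst C)(c := cl_late P c (cst C c) j m) \<rparr>) h"
| done_w: "\<lbrakk> reach S t W R P C h; ph C c = WPh v; card (dom (got C c)) = S - t \<rbrakk> \<Longrightarrow>
     reach S t W R P
       (C\<lparr> ph := (ph C)(c := Idle), cst := (cst C)(c := w_done P c (cst C c) v (got C c)) \<rparr>)
       (h @ [RespW c])"
| done_r1: "\<lbrakk> reach S t W R P C h; ph C c = RPh1; card (dom (got C c)) = S - t;
              c' = r_mid P c (cst C c) (got C c) \<rbrakk> \<Longrightarrow>
     reach S t W R P
       (C\<lparr> ph := (ph C)(c := RPh2), cst := (cst C)(c := c'), got := (got C)(c := Map.empty),
           reqs := reqs C \<union> {(c, j, opn C c, 2, r_req2 P c c' j) | j. j < S} \<rparr>) h"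
| done_r2: "\<lbrakk> reach S t W R P C h; ph C c = RPh2; card (dom (got C c)) = S - t;
              r_done P c (cst C c) (got C c) = (c', v) \<rbrakk> \<Longrightarrow>
     reach S t W R P
       (C\<lparr> ph := (ph C)(c := Idle), cst := (cst C)(c := c') \<rparr>) (h @ [RespR c v])"

fun ev_client :: "event \<Rightarrow> client" where
  "ev_client (InvW c _) = c" | "ev_client (InvR c) = c"
| "ev_client (RespW c) = c" | "ev_client (RespR c _) = c"

fun is_inv :: "event \<Rightarrow> bool" where
  "is_inv (InvW _ _) = True" | "is_inv (InvR _) = True" | "is_inv _ = False"

fun is_winv :: "event \<Rightarrow> bool" where
  "is_winv (InvW _ _) = True" | "is_winv _ = False"

fun is_rinv :: "event \<Rightarrow> bool" where
  "is_rinv (InvR _) = True" | "is_rinv _ = False"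

fun wval :: "event \<Rightarrow> nat" where
  "wval (InvW _ v) = v" | "wval _ = 0"

fun rval :: "event \<Rightarrow> nat" where
  "rval (RespR _ v) = v" | "rval _ = 0"

text \<open>Operations are identified by the position of their invocation in the history;
 in a well-formed history the response of the operation invoked at position i is the
 next event of the same client.\<close>
definition completed :: "event list \<Rightarrow> nat \<Rightarrow> bool" where
  "completed h i \<longleftrightarrow> (\<exists>j. i < j \<and> j < length h \<and> ev_client (h ! j) = ev_client (h ! i))"

definition resp_of :: "event list \<Rightarrow> nat \<Rightarrow> nat" where
  "resp_of h i = (LEAST j. i < j \<and> j < length h \<and> ev_client (h ! j) = ev_client (h ! i))"

definition precedes :: "event list \<Rightarrow> nat \<Rightarrow> nat \<Rightarrow> bool" where
  "precedes h i1 i2 \<longleftrightarrow> completed h i1 \<and> resp_of h i1 < i2"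

definition last_written :: "event list \<Rightarrow> nat list \<Rightarrow> nat \<Rightarrow> nat" where
  "last_written h pi a =
     (let ws = filter (\<lambda>x. is_winv (h ! x)) (take a pi) in
      if ws = [] then 0 else wval (h ! last ws))"

definition atomic :: "event list \<Rightarrow> bool" where
  "atomic h \<longleftrightarrow> (\<exists>pi. distinct pi
      \<and> (\<forall>i \<in> set pi. i < length h \<and> is_inv (h ! i) \<and> (completed h i \<or> is_winv (h ! i)))
      \<and> (\<forall>i < length h. is_inv (h ! i) \<and> completed h i \<longrightarrow> i \<in> set pi)
      \<and> (\<forall>a < length pi. \<forall>b < length pi. precedes h (pi ! a) (pi ! b) \<longrightarrow> a < b)
      \<and> (\<forall>a < length pi. is_rinv (h ! (pi ! a)) \<longrightarrow>
            rval (h ! resp_of h (pi ! a)) = last_written h pi a))"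

end

theory Submission
  imports Defs
begin


lemma setcompr_img: "{f j | j. j < (S::nat)} = f ` {..<S}" by auto

lemma reach_finite:
  assumes "reach S t W R P C h"
  shows "finite (reqs C) \<and> finite (reps C)"
  using assms
proof (induction rule: reach.induct)
  case init
  then show ?case by (simp add: init_conf_def)
next
  case (inv_w C h i v)
  then show ?case by (simp add: setcompr_img)
next
  case (inv_r C h i)
  then show ?case by (simp add: setcompr_img)
next
  case (done_r1 C h c c')
  then show ?case by (simp add: setcompr_img)
qed auto

datatype 'm lab = LD client nat nat nat 'm | LR nat client nat nat 'm | LDn client

fun lcl :: "'m lab \<Rightarrow> client" where
  "lcl (LD c j k r m) = c" | "lcl (LR j c k r m) = c" | "lcl (LDn c) = c"

definition rdr :: "client \<Rightarrow> bool" where "rdr c \<longleftrightarrow> c = Rd 0 \<or> c = Rd 1"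

locale ctx =
  fixes S t W R :: nat and P :: "('c, 's, 'm) proto"
  assumes S2: "S \<ge> 2" and t1: "t \<ge> 1" and W2: "W \<ge> 2" and R2: "R \<ge> 2"
  and atom: "\<And>C h. reach S t W R P C h \<Longrightarrow> atomic h"
begin

abbreviation "q \<equiv> S - t"

fun en :: "('c, 's, 'm) conf \<Rightarrow> 'm lab \<Rightarrow> bool" where
  "en C (LD c j k r m) \<longleftrightarrow> rdr c \<and> j < S \<and> (c,j,k,r,m) \<in> reqs C \<and> k = opn C c \<and> ph C c \<noteq> Idle \<and> r = round_of (ph C c)"
| "en C (LR j c k r m) \<longleftrightarrow> rdr c \<and> j < S \<and> (j,c,k,r,m) \<in> reps C \<and> k = opn C c \<and> ph C c \<noteq> Idle \<and> r = round_of (ph C c) \<and> card (dom (got C c)) < q"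
| "en C (LDn c) \<longleftrightarrow> rdr c \<and> (ph C c = RPh1 \<or> ph C c = RPh2) \<and> card (dom (got C c)) = q"

fun eff :: "('c, 's, 'm) conf \<Rightarrow> 'm lab \<Rightarrow> ('c, 's, 'm) conf" where
  "eff C (LD c j k r m) = C\<lparr> sst := (sst C)(j := fst (srv_step P j (sst C j) c m)), reqs := reqs C - {(c, j, k, r, m)},
           reps := reps C \<union> {(j, c, k, r, snd (srv_step P j (sst C j) c m))} \<rparr>"
| "eff C (LR j c k r m) = C\<lparr> reps := reps C - {(j, c, k, r, m)}, got := (got C)(c := (got C c)(j \<mapsto> m)) \<rparr>"
| "eff C (LDn c) = (if ph C c = RPh1 then
       C\<lparr> ph := (ph C)(c := RPh2), cst := (cst C)(c := r_mid P c (cst C c) (got C c)), got := (got C)(c := Map.empty),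
           reqs := reqs C \<union> {(c, j, opn C c, 2, r_req2 P c (r_mid P c (cst C c) (got C c)) j) | j. j < S} \<rparr>
     else C\<lparr> ph := (ph C)(c := Idle), cst := (cst C)(c := fst (r_done P c (cst C c) (got C c))) \<rparr>)"

fun out :: "('c, 's, 'm) conf \<Rightarrow> 'm lab \<Rightarrow> event list" where
  "out C (LDn c) = (if ph C c = RPh2 then [RespR c (snd (r_done P c (cst C c) (got C c)))] else [])"
| "out C _ = []"

lemma step_reach:
  assumes "reach S t W R P C h" "en C l"
  shows "reach S t W R P (eff C l) (h @ out C l)"
proof (cases l)
  case (LD c j k r m)
  then show ?thesis using assms
    using reach.deliver[of S t W R P C h c j k r m "fst (srv_step P j (sst C j) c m)" "snd (srv_step P j (sst C j) c m)"]
    by auto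
next
  case (LR j c k r m)
  then show ?thesis using assms by (auto intro: reach.recv)
next
  case (LDn c)
  show ?thesis
  proof (cases "ph C c = RPh1")
    case True
    then show ?thesis using assms LDn by (auto intro: reach.done_r1)
  next
    case False
    then have "ph C c = RPh2" using assms LDn by auto
    then show ?thesis using assms LDn
      by (cases "r_done P c (cst C c) (got C c)") (auto intro: reach.done_r2)
  qed
qed

fun lsrv :: "'m lab \<Rightarrow> nat option" where
  "lsrv (LD c j k r m) = Some j" | "lsrv (LR j c k r m) = Some j" | "lsrv (LDn c) = None"

fun isLD :: "'m lab \<Rightarrow> bool" where
  "isLD (LD c j k r m) = True" | "isLD _ = False"

definition avoids :: "nat set \<Rightarrow> 'm lab \<Rightarrow> bool" where
  "avoids J l \<longleftrightarrow> (\<forall>j. lsrv l = Some j \<longrightarrow> j \<notin> J)"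

definition sim :: "client \<Rightarrow> nat set \<Rightarrow> ('c, 's, 'm) conf \<Rightarrow> ('c, 's, 'm) conf \<Rightarrow> bool" where
  "sim c J C C' \<longleftrightarrow> (\<forall>j. j \<notin> J \<longrightarrow> sst C j = sst C' j) \<and> cst C c = cst C' c \<and> ph C c = ph C' c
     \<and> opn C c = opn C' c \<and> got C c = got C' c
     \<and> (\<forall>j k r m. j \<notin> J \<longrightarrow> ((c,j,k,r,m) \<in> reqs C \<longleftrightarrow> (c,j,k,r,m) \<in> reqs C'))
     \<and> (\<forall>j k r m. j \<notin> J \<longrightarrow> ((j,c,k,r,m) \<in> reps C \<longleftrightarrow> (j,c,k,r,m) \<in> reps C'))"

lemma sim_refl: "sim c J C C" by (simp add: sim_def)
lemma sim_sym: "sim c J C C' \<Longrightarrow> sim c J C' C" by (simp add: sim_def)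
lemma sim_trans: "sim c J C C' \<Longrightarrow> sim c J C' C'' \<Longrightarrow> sim c J C C''" by (simp add: sim_def)

lemma sim_step:
  assumes "sim c J C C'" "en C l" "lcl l = c" "avoids J l"
  shows "en C' l \<and> sim c J (eff C l) (eff C' l) \<and> out C l = out C' l"
proof (cases l)
  case (LD c0 j k r m)
  with assms show ?thesis by (auto simp: sim_def avoids_def)
next
  case (LR j c0 k r m)
  with assms show ?thesis by (auto simp: sim_def avoids_def)
next
  case (LDn c0)
  with assms show ?thesis by (auto simp: sim_def avoids_def)
qed

end


context ctx begin

definition indep :: "'m lab \<Rightarrow> 'm lab \<Rightarrow> bool" where
  "indep l1 l2 \<longleftrightarrow> (lcl l1 \<noteq> lcl l2 \<and> \<not> (isLD l1 \<and> isLD l2 \<and> lsrv l1 = lsrv l2))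
      \<or> (lcl l1 = lcl l2 \<and> isLD l1 \<and> isLD l2 \<and> lsrv l1 \<noteq> lsrv l2)"

lemma commute:
  assumes "en C l1" "en C l2" "indep l1 l2"
  shows "en (eff C l1) l2 \<and> eff (eff C l1) l2 = eff (eff C l2) l1 \<and> out (eff C l1) l2 = out C l2"
proof (cases l1)
  case (LD c1 j1 k1 r1 m1)
  then show ?thesis using assms
    by (cases l2) (auto simp: indep_def fun_upd_twist insert_commute Diff_insert[symmetric] Un_Diff intro!: conf.equality)
next
  case (LR j1 c1 k1 r1 m1)
  then show ?thesis using assms
    by (cases l2) (auto simp: indep_def fun_upd_twist insert_commute Diff_insert[symmetric] Un_Diff intro!: conf.equality)
next
  case (LDn c1)
  then show ?thesis using assms
    by (cases l2) (auto simp: indep_def fun_upd_twist insert_commute Diff_insert[symmetric] Un_Diff intro!: conf.equality)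
qed

end


context ctx begin

definition INV :: "('c, 's, 'm) conf \<Rightarrow> client \<Rightarrow> bool" where
  "INV C c \<longleftrightarrow> (\<forall>v. ph C c \<noteq> WPh v)
    \<and> (ph C c \<noteq> Idle \<longrightarrow> (\<forall>j<S. j \<in> dom (got C c) \<or> (\<exists>m. (c,j,opn C c, round_of (ph C c), m) \<in> reqs C)
                                    \<or> (\<exists>m. (j,c,opn C c, round_of (ph C c), m) \<in> reps C)))
    \<and> (ph C c = RPh1 \<longrightarrow> (\<forall>j m. (c,j,opn C c,2,m) \<notin> reqs C \<and> (j,c,opn C c,2,m) \<notin> reps C))
    \<and> dom (got C c) \<subseteq> {..<S} \<and> card (dom (got C c)) \<le> q"

lemma inv_LD:
  assumes "INV C c" "en C (LD c1 j1 k1 r1 m1)" "rdr c"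
  shows "INV (eff C (LD c1 j1 k1 r1 m1)) c"
proof -
  have cov: "\<forall>j<S. j \<in> dom (got C c) \<or> (\<exists>m. (c,j,opn C c, round_of (ph C c), m) \<in> reqs C)
                                    \<or> (\<exists>m. (j,c,opn C c, round_of (ph C c), m) \<in> reps C)" if "ph C c \<noteq> Idle"
    using assms(1) that unfolding INV_def by blast
  show ?thesis
    unfolding INV_def
  proof (intro conjI impI allI)
    show "ph (eff C (LD c1 j1 k1 r1 m1)) c \<noteq> WPh v" for v using assms(1) by (simp add: INV_def)
  next
    fix j assume "ph (eff C (LD c1 j1 k1 r1 m1)) c \<noteq> Idle" "j < S"
    then have "ph C c \<noteq> Idle" by simp
    then have "j \<in> dom (got C c) \<or> (\<exists>m. (c,j,opn C c, round_of (ph C c), m) \<in> reqs C)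
                                    \<or> (\<exists>m. (j,c,opn C c, round_of (ph C c), m) \<in> reps C)" using cov \<open>j < S\<close> by blast
    then show "j \<in> dom (got (eff C (LD c1 j1 k1 r1 m1)) c) \<or>
          (\<exists>m. (c, j, opn (eff C (LD c1 j1 k1 r1 m1)) c, round_of (ph (eff C (LD c1 j1 k1 r1 m1)) c), m) \<in> reqs (eff C (LD c1 j1 k1 r1 m1))) \<or>
          (\<exists>m. (j, c, opn (eff C (LD c1 j1 k1 r1 m1)) c, round_of (ph (eff C (LD c1 j1 k1 r1 m1)) c), m) \<in> reps (eff C (LD c1 j1 k1 r1 m1)))"
      using assms(2) by (cases "c1 = c \<and> j1 = j") auto
  next
    fix j m assume "ph (eff C (LD c1 j1 k1 r1 m1)) c = RPh1"
    then have "ph C c = RPh1" by simp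
    then have "(c,j,opn C c,2,m) \<notin> reqs C \<and> (j,c,opn C c,2,m) \<notin> reps C" for j m using assms(1) unfolding INV_def by blast
    then show "(c, j, opn (eff C (LD c1 j1 k1 r1 m1)) c, 2, m) \<notin> reqs (eff C (LD c1 j1 k1 r1 m1))"
      "(j, c, opn (eff C (LD c1 j1 k1 r1 m1)) c, 2, m) \<notin> reps (eff C (LD c1 j1 k1 r1 m1))"
      using assms(2) \<open>ph C c = RPh1\<close> by auto
  next
    show "dom (got (eff C (LD c1 j1 k1 r1 m1)) c) \<subseteq> {..<S}" "card (dom (got (eff C (LD c1 j1 k1 r1 m1)) c)) \<le> q"
      using assms(1) by (auto simp: INV_def)
  qed
qed

lemma inv_LR:
  assumes "INV C c" "en C (LR j1 c1 k1 r1 m1)" "rdr c"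
  shows "INV (eff C (LR j1 c1 k1 r1 m1)) c"
proof -
  let ?D = "eff C (LR j1 c1 k1 r1 m1)"
  have cov: "\<forall>j<S. j \<in> dom (got C c) \<or> (\<exists>m. (c,j,opn C c, round_of (ph C c), m) \<in> reqs C)
                                    \<or> (\<exists>m. (j,c,opn C c, round_of (ph C c), m) \<in> reps C)" if "ph C c \<noteq> Idle"
    using assms(1) that unfolding INV_def by blast
  have fin: "finite (dom (got C c))" using assms(1) unfolding INV_def using finite_subset by blast
  show ?thesis
    unfolding INV_def
  proof (intro conjI impI allI)
    show "ph ?D c \<noteq> WPh v" for v using assms(1) by (simp add: INV_def)
  next
    fix j assume "ph ?D c \<noteq> Idle" "j < S"
    then have "ph C c \<noteq> Idle" by simp
    then have "j \<in> dom (got C c) \<or> (\<exists>m. (c,j,opn C c, round_of (ph C c), m) \<in> reqs C)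
                                    \<or> (\<exists>m. (j,c,opn C c, round_of (ph C c), m) \<in> reps C)" using cov \<open>j < S\<close> by blast
    then show "j \<in> dom (got ?D c) \<or>
          (\<exists>m. (c, j, opn ?D c, round_of (ph ?D c), m) \<in> reqs ?D) \<or>
          (\<exists>m. (j, c, opn ?D c, round_of (ph ?D c), m) \<in> reps ?D)"
      using assms(2) by (cases "c1 = c \<and> j1 = j") auto
  next
    fix j m assume "ph ?D c = RPh1"
    then have "ph C c = RPh1" by simp
    then have "(c,j,opn C c,2,m) \<notin> reqs C \<and> (j,c,opn C c,2,m) \<notin> reps C" for j m using assms(1) unfolding INV_def by blast
    then show "(c, j, opn ?D c, 2, m) \<notin> reqs ?D"
      "(j, c, opn ?D c, 2, m) \<notin> reps ?D"
      using assms(2) \<open>ph C c = RPh1\<close> by auto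
  next
    show "dom (got ?D c) \<subseteq> {..<S}"
      using assms(1,2) by (auto simp: INV_def)
  next
    show "card (dom (got ?D c)) \<le> q"
    proof (cases "c1 = c")
      case True
      have "card (dom (got C c)) < q" using assms True by auto
      then have "card (insert j1 (dom (got C c))) \<le> q" using fin
        by (simp add: card_insert_if)
      then show ?thesis using True by simp
    next
      case False
      then show ?thesis using assms(1) by (simp add: INV_def)
    qed
  qed
qed

lemma inv_LDn:
  assumes "INV C c" "en C (LDn c1)" "rdr c"
  shows "INV (eff C (LDn c1)) c"
proof (cases "c1 = c")
  case False
  let ?D = "eff C (LDn c1)"
  have e: "ph ?D c = ph C c" "opn ?D c = opn C c" "got ?D c = got C c" "reps ?D = reps C" "reqs C \<subseteq> reqs ?D"
    using False by auto
  have n: "(c,j,k,r,m) \<in> reqs ?D \<Longrightarrow> (c,j,k,r,m) \<in> reqs C" for j k r m using False by (auto split: if_splits)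
  show ?thesis using assms(1) unfolding INV_def e
    using e(5) n by blast
next
  case True
  show ?thesis
  proof (cases "ph C c = RPh1")
    case True1: True
    then show ?thesis using assms True by (auto simp: INV_def)
  next
    case False
    then have "ph C c = RPh2" using assms True by auto
    then show ?thesis using assms True by (auto simp: INV_def)
  qed
qed

lemma inv_pres:
  assumes "INV C c" "en C l" "rdr c"
  shows "INV (eff C l) c"
  using assms inv_LD inv_LR inv_LDn by (cases l) auto

end


context ctx begin

definition shp :: "event list \<Rightarrow> bool" where
  "shp s \<longleftrightarrow> s = [] \<or> (\<exists>c u. rdr c \<and> s = [RespR c u])
     \<or> (\<exists>u u'. s = [RespR (Rd 0) u, RespR (Rd 1) u'] \<or> s = [RespR (Rd 1) u, RespR (Rd 0) u'])"

definition UI :: "event list \<Rightarrow> ('c, 's, 'm) conf \<Rightarrow> event list \<Rightarrow> bool" where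
  "UI hb C h \<longleftrightarrow> reach S t W R P C h \<and> (\<forall>c. rdr c \<longrightarrow> INV C c)
     \<and> (\<exists>s. h = hb @ s \<and> shp s \<and> (\<forall>c. rdr c \<longrightarrow> (ph C c = Idle \<longleftrightarrow> (\<exists>u. RespR c u \<in> set s))))"

lemma ph_eff_other: "lcl l \<noteq> c \<Longrightarrow> ph (eff C l) c = ph C c"
  by (cases l) auto

lemma out_nil: "\<not> (\<exists>c. l = LDn c \<and> ph C c = RPh2) \<Longrightarrow> out C l = []"
  by (cases l) auto

lemma UI_pres:
  assumes "UI hb C h" "en C l"
  shows "UI hb (eff C l) (h @ out C l)"
proof -
  from assms(1) obtain s where s: "h = hb @ s" "shp s" "\<forall>c. rdr c \<longrightarrow> (ph C c = Idle \<longleftrightarrow> (\<exists>u. RespR c u \<in> set s))"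
    unfolding UI_def by blast
  have r: "reach S t W R P (eff C l) (h @ out C l)" using assms step_reach unfolding UI_def by blast
  have i: "\<forall>c. rdr c \<longrightarrow> INV (eff C l) c" using assms inv_pres unfolding UI_def by blast
  show ?thesis
  proof (cases "\<exists>c. l = LDn c \<and> ph C c = RPh2")
    case False
    then have os: "out C l = []" by (rule out_nil)
    have "ph (eff C l) c = Idle \<longleftrightarrow> ph C c = Idle" for c
    proof (cases "lcl l = c")
      case True
      then show ?thesis using False assms(2) by (cases l) auto
    qed (simp add: ph_eff_other)
    then show ?thesis using r i s os unfolding UI_def by auto
  next
    case True
    then obtain c where c: "l = LDn c" "ph C c = RPh2" by blast
    have rc: "rdr c" using assms(2) c by simp
    let ?v = "snd (r_done P c (cst C c) (got C c))"
    have os: "out C l = [RespR c ?v]" using c by simp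
    have ni: "\<not> (\<exists>u. RespR c u \<in> set s)" using s(3) rc c by auto
    have phe: "ph (eff C l) c' = (if c' = c then Idle else ph C c')" for c'
      using c by auto
    have "shp (s @ [RespR c ?v])"
      using s(2) ni rc unfolding shp_def rdr_def by auto
    moreover have "\<forall>c'. rdr c' \<longrightarrow> (ph (eff C l) c' = Idle \<longleftrightarrow> (\<exists>u. RespR c' u \<in> set (s @ [RespR c ?v])))"
      using s(3) phe by auto
    ultimately show ?thesis using r i s os unfolding UI_def by auto
  qed
qed

inductive urun :: "('c, 's, 'm) conf \<Rightarrow> 'm lab list \<Rightarrow> ('c, 's, 'm) conf \<Rightarrow> event list \<Rightarrow> bool" where
  nil: "urun C [] C []"
| cons: "en C l \<Longrightarrow> urun (eff C l) ls C' os \<Longrightarrow> urun C (l # ls) C' (out C l @ os)"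

lemma urun_UI: "urun C ls C' os \<Longrightarrow> UI hb C h \<Longrightarrow> UI hb C' (h @ os)"
proof (induction arbitrary: h rule: urun.induct)
  case (cons C l ls C' os)
  then have "UI hb (eff C l) (h @ out C l)" using UI_pres by blast
  then show ?case using cons by (metis append.assoc)
qed simp

lemma urun_app: "urun C ls1 C1 o1 \<Longrightarrow> urun C1 ls2 C2 o2 \<Longrightarrow> urun C (ls1 @ ls2) C2 (o1 @ o2)"
  by (induction rule: urun.induct) (auto intro: urun.intros)

lemma urun_one: "en C l \<Longrightarrow> urun C [l] (eff C l) (out C l)"
  using urun.cons[OF _ urun.nil] by fastforce

lemma urun_sim:
  assumes "urun C ls C1 os" "\<forall>l\<in>set ls. lcl l = c \<and> avoids J l" "sim c J C C'"
  shows "\<exists>C1'. urun C' ls C1' os \<and> sim c J C1 C1'"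
  using assms
proof (induction arbitrary: C' rule: urun.induct)
  case (nil C)
  then show ?case by (auto intro: urun.nil)
next
  case (cons C l ls C2 os)
  then have "en C' l \<and> sim c J (eff C l) (eff C' l) \<and> out C l = out C' l" using sim_step by auto
  moreover obtain C1' where "urun (eff C' l) ls C1' os \<and> sim c J C2 C1'" using cons calculation by auto
  ultimately show ?case by (metis urun.cons)
qed

end


context ctx begin

definition cq :: "('c, 's, 'm) conf \<Rightarrow> client \<Rightarrow> _" where
  "cq C c = {x \<in> reqs C. \<exists>j m. x = (c,j,opn C c, round_of (ph C c), m)}"
definition cp :: "('c, 's, 'm) conf \<Rightarrow> client \<Rightarrow> _" where
  "cp C c = {x \<in> reps C. \<exists>j m. x = (j,c,opn C c, round_of (ph C c), m)}"
definition XX :: "('c, 's, 'm) conf \<Rightarrow> client \<Rightarrow> nat" where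
  "XX C c = 2 * card (cq C c) + card (cp C c) + (S - card (dom (got C c)))"
definition phi :: "('c, 's, 'm) conf \<Rightarrow> client \<Rightarrow> nat" where
  "phi C c = (case ph C c of RPh1 \<Rightarrow> 3 * S + 2 + XX C c | RPh2 \<Rightarrow> 1 + XX C c | _ \<Rightarrow> 0)"
definition mu :: "('c, 's, 'm) conf \<Rightarrow> nat" where
  "mu C = phi C (Rd 0) + phi C (Rd 1)"

lemma phi_other:
  assumes "lcl l \<noteq> c"
  shows "phi (eff C l) c = phi C c"
proof -
  have "cq (eff C l) c = cq C c \<and> cp (eff C l) c = cp C c \<and> got (eff C l) c = got C c \<and> ph (eff C l) c = ph C c"
    using assms by (cases l) (auto simp: cq_def cp_def)
  then show ?thesis unfolding phi_def XX_def by (simp only:)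
qed

lemma phi_dec:
  assumes "UI hb C h" "en C l"
  shows "phi (eff C l) (lcl l) < phi C (lcl l)"
proof -
  have fin: "finite (reqs C)" "finite (reps C)" using assms(1) reach_finite unfolding UI_def by blast+
  have finq: "finite (cq C c)" "finite (cp C c)" for c using fin unfolding cq_def cp_def by auto
  show ?thesis
  proof (cases l)
    case (LD c j k r m)
    let ?D = "eff C l"
    have en: "rdr c" "(c,j,k,r,m) \<in> reqs C" "k = opn C c" "ph C c \<noteq> Idle" "r = round_of (ph C c)"
      using assms(2) LD by auto
    have tq: "(c,j,k,r,m) \<in> cq C c" using en unfolding cq_def by auto
    have q1: "cq ?D c = cq C c - {(c,j,k,r,m)}" using LD unfolding cq_def by auto
    have p1: "cp ?D c \<subseteq> insert (j, c, k, r, snd (srv_step P j (sst C j) c m)) (cp C c)"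
      using LD en unfolding cp_def by auto
    have "card (cq ?D c) + 1 = card (cq C c)" unfolding q1 using card_Suc_Diff1[OF finq(1) tq] by simp
    moreover have "card (cp ?D c) \<le> card (cp C c) + 1"
      using p1 finq card_mono[OF _ p1] card_insert_le_m1 by (metis Suc_eq_plus1 card_insert_if finite_insert le_SucI)
    moreover have g: "got ?D c = got C c" and "ph ?D c = ph C c" using LD by auto
    ultimately have "XX ?D c < XX C c" unfolding XX_def g by linarith
    moreover have nw: "\<forall>v. ph C c \<noteq> WPh v" using assms(1) en(1) unfolding UI_def INV_def by blast
    moreover have lc: "lcl l = c" using LD by auto
    ultimately show ?thesis using en \<open>ph ?D c = ph C c\<close> unfolding phi_def lc by (cases "ph C c") auto
  next
    case (LR j c k r m)
    let ?D = "eff C l"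
    have en: "rdr c" "(j,c,k,r,m) \<in> reps C" "k = opn C c" "ph C c \<noteq> Idle" "r = round_of (ph C c)"
      using assms(2) LR by auto
    have tp: "(j,c,k,r,m) \<in> cp C c" using en unfolding cp_def by auto
    have p1: "cp ?D c = cp C c - {(j,c,k,r,m)}" using LR unfolding cp_def by auto
    have q1: "cq ?D c = cq C c" using LR unfolding cq_def by auto
    have "card (cp ?D c) + 1 = card (cp C c)" unfolding p1 using card_Suc_Diff1[OF finq(2) tp] by simp
    have iv: "INV C c" using assms(1) en(1) unfolding UI_def by blast
    then have "dom (got C c) \<subseteq> {..<S}" unfolding INV_def by blast
    then have fd: "finite (dom (got C c))" using finite_subset by blast
    have "dom (got ?D c) = insert j (dom (got C c))" using LR by simp
    then have "card (dom (got C c)) \<le> card (dom (got ?D c))" using fd by (simp add: card_insert_le)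
    moreover note \<open>card (cp ?D c) + 1 = card (cp C c)\<close>
    moreover have "ph ?D c = ph C c" using LR by auto
    ultimately have "XX ?D c < XX C c" unfolding XX_def q1 by linarith
    moreover have nw: "\<forall>v. ph C c \<noteq> WPh v" using iv unfolding INV_def by blast
    moreover have lc: "lcl l = c" using LR by auto
    ultimately show ?thesis using en \<open>ph ?D c = ph C c\<close> unfolding phi_def lc by (cases "ph C c") auto
  next
    case (LDn c)
    have en: "rdr c" "ph C c = RPh1 \<or> ph C c = RPh2" using assms(2) LDn by auto
    show ?thesis
    proof (cases "ph C c = RPh1")
      case True
      let ?D = "eff C l"
      let ?N = "{(c, j, opn C c, 2::nat, r_req2 P c (r_mid P c (cst C c) (got C c)) j) | j. j < S}"
      have I3: "\<forall>j m. (c,j,opn C c,2,m) \<notin> reqs C \<and> (j,c,opn C c,2,m) \<notin> reps C"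
        using assms(1) en True unfolding UI_def INV_def by blast
      have phD: "ph ?D c = RPh2" "opn ?D c = opn C c" using LDn True by auto
      have sub: "cq ?D c \<subseteq> ?N" using LDn True I3 unfolding cq_def by auto
      have Ni: "?N = (\<lambda>j. (c, j, opn C c, 2::nat, r_req2 P c (r_mid P c (cst C c) (got C c)) j)) ` {..<S}" by auto
      have cN: "card ?N \<le> S" unfolding Ni using card_image_le[of "{..<S}"] by simp
      have fN: "finite ?N" unfolding Ni by simp
      have "card (cq ?D c) \<le> card ?N" using card_mono[OF fN sub] .
      then have c1: "card (cq ?D c) \<le> S" using cN by linarith
      have "cp ?D c = {}" using LDn True I3 unfolding cp_def by auto
      then have "XX ?D c \<le> 3 * S" unfolding XX_def using c1 by simp
      then show ?thesis using phD True LDn unfolding phi_def by simp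
    next
      case False
      then have "ph C c = RPh2" using en by auto
      then show ?thesis using LDn unfolding phi_def by simp
    qed
  qed
qed

lemma mu_dec:
  assumes "UI hb C h" "en C l"
  shows "mu (eff C l) < mu C"
proof -
  have "rdr (lcl l)" using assms(2) by (cases l) auto
  then consider "lcl l = Rd 0" | "lcl l = Rd 1" unfolding rdr_def by blast
  then show ?thesis
  proof cases
    case 1
    then show ?thesis using phi_dec[OF assms] phi_other[of l "Rd 1"] unfolding mu_def by simp
  next
    case 2
    then show ?thesis using phi_dec[OF assms] phi_other[of l "Rd 0"] unfolding mu_def by simp
  qed
qed

end


context ctx begin

lemma free_server:
  assumes "UI hb C h" "rdr c" "card (dom (got C c)) < q" "J \<subseteq> {j0}"
  shows "\<exists>j<S. j \<notin> J \<and> j \<notin> dom (got C c)"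
proof (rule ccontr)
  assume "\<not> ?thesis"
  then have sub: "{..<S} - {j0} \<subseteq> dom (got C c)" using assms(4) by auto
  have iv: "INV C c" using assms(1,2) unfolding UI_def by blast
  then have "dom (got C c) \<subseteq> {..<S}" unfolding INV_def by blast
  then have fd: "finite (dom (got C c))" using finite_subset by blast
  have "S - 1 \<le> card ({..<S} - {j0})" by (simp add: card_Diff_singleton_if)
  also have "\<dots> \<le> card (dom (got C c))" using card_mono[OF fd sub] .
  finally show False using assms(3) t1 by linarith
qed

lemma round_complete:
  assumes "UI hb C h" "rdr c" "ph C c = RPh1 \<or> ph C c = RPh2" "J \<subseteq> {j0}"
  shows "\<exists>ls C' os. urun C ls C' os \<and> (\<forall>l\<in>set ls. lcl l = c \<and> avoids J l) \<and> ph C' c = ph C c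
           \<and> card (dom (got C' c)) = q \<and> UI hb C' (h @ os)"
  using assms
proof (induction "q - card (dom (got C c))" arbitrary: C h rule: less_induct)
  case less
  have iv: "INV C c" using less.prems(1,2) unfolding UI_def by blast
  then have dsub: "dom (got C c) \<subseteq> {..<S}" and cle: "card (dom (got C c)) \<le> q" unfolding INV_def by blast+
  have fd: "finite (dom (got C c))" using dsub finite_subset by blast
  show ?case
  proof (cases "card (dom (got C c)) = q")
    case True
    then show ?thesis using less.prems urun.nil[of C]
      by (intro exI[of _ "[]"] exI[of _ C] exI[of _ "[]"]) simp
  next
    case False
    then have lt: "card (dom (got C c)) < q" using cle by linarith
    obtain j where j: "j < S" "j \<notin> J" "j \<notin> dom (got C c)" using free_server[OF less.prems(1,2) lt less.prems(4)] by blast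
    have nI: "ph C c \<noteq> Idle" using less.prems(3) by auto
    have "j \<in> dom (got C c) \<or> (\<exists>m. (c,j,opn C c, round_of (ph C c), m) \<in> reqs C)
                                    \<or> (\<exists>m. (j,c,opn C c, round_of (ph C c), m) \<in> reps C)"
      using iv nI j(1) unfolding INV_def by blast
    then have "\<exists>ls1 C1 os1. urun C ls1 C1 os1 \<and> (\<forall>l\<in>set ls1. lcl l = c \<and> avoids J l) \<and> ph C1 c = ph C c
           \<and> dom (got C1 c) = insert j (dom (got C c)) \<and> UI hb C1 (h @ os1)"
    proof (elim disjE exE)
      assume "j \<in> dom (got C c)" then show ?thesis using j by blast
    next
      fix m assume m: "(j,c,opn C c, round_of (ph C c), m) \<in> reps C"
      let ?l = "LR j c (opn C c) (round_of (ph C c)) m"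
      have en: "en C ?l" using m less.prems(2) j(1) nI lt by simp
      have "urun C [?l] (eff C ?l) (out C ?l)" using urun_one[OF en] .
      moreover have "UI hb (eff C ?l) (h @ out C ?l)" using UI_pres[OF less.prems(1) en] .
      moreover have "\<forall>l\<in>set [?l]. lcl l = c \<and> avoids J l" using j(2) by (simp add: avoids_def)
      ultimately show ?thesis by (intro exI[of _ "[?l]"] exI[of _ "eff C ?l"] exI[of _ "out C ?l"]) auto
    next
      fix m assume m: "(c,j,opn C c, round_of (ph C c), m) \<in> reqs C"
      let ?l = "LD c j (opn C c) (round_of (ph C c)) m"
      have en: "en C ?l" using m less.prems(2) j(1) nI by simp
      let ?C1 = "eff C ?l"
      let ?m' = "snd (srv_step P j (sst C j) c m)"
      let ?l2 = "LR j c (opn C c) (round_of (ph C c)) ?m'"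
      have en2: "en ?C1 ?l2" using less.prems(2) j(1) nI lt by simp
      have u1: "UI hb ?C1 (h @ out C ?l)" using UI_pres[OF less.prems(1) en] .
      have "urun C [?l, ?l2] (eff ?C1 ?l2) (out C ?l @ out ?C1 ?l2)"
        using urun.cons[OF en urun_one[OF en2]] .
      moreover have "UI hb (eff ?C1 ?l2) (h @ (out C ?l @ out ?C1 ?l2))"
        using UI_pres[OF u1 en2] by simp
      moreover have "\<forall>l\<in>set [?l, ?l2]. lcl l = c \<and> avoids J l" using j(2) by (simp add: avoids_def)
      ultimately show ?thesis
        by (intro exI[of _ "[?l, ?l2]"] exI[of _ "eff ?C1 ?l2"] exI[of _ "out C ?l @ out ?C1 ?l2"]) auto
    qed
    then obtain ls1 C1 os1 where r1: "urun C ls1 C1 os1" "\<forall>l\<in>set ls1. lcl l = c \<and> avoids J l" "ph C1 c = ph C c"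
      "dom (got C1 c) = insert j (dom (got C c))" "UI hb C1 (h @ os1)" by blast
    have "card (dom (got C1 c)) = Suc (card (dom (got C c)))" using r1(4) fd j(3) by simp
    then have lt2: "q - card (dom (got C1 c)) < q - card (dom (got C c))" using lt by linarith
    have p1: "ph C1 c = RPh1 \<or> ph C1 c = RPh2" using r1(3) less.prems(3) by simp
    obtain ls2 C2 os2 where r2: "urun C1 ls2 C2 os2" "\<forall>l\<in>set ls2. lcl l = c \<and> avoids J l" "ph C2 c = ph C1 c"
      "card (dom (got C2 c)) = q" "UI hb C2 ((h @ os1) @ os2)"
      using less.hyps[OF lt2 r1(5) less.prems(2) p1 less.prems(4)] by blast
    show ?thesis using urun_app[OF r1(1) r2(1)] r1 r2 by (intro exI[of _ "ls1 @ ls2"] exI[of _ C2] exI[of _ "os1 @ os2"]) auto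
  qed
qed

lemma solo2:
  assumes "UI hb C h" "rdr c" "ph C c = RPh2" "J \<subseteq> {j0}"
  shows "\<exists>ls C' os u. urun C ls C' os \<and> (\<forall>l\<in>set ls. lcl l = c \<and> avoids J l) \<and> RespR c u \<in> set os"
proof -
  obtain ls C1 os where r: "urun C ls C1 os" "\<forall>l\<in>set ls. lcl l = c \<and> avoids J l" "ph C1 c = RPh2"
      "card (dom (got C1 c)) = q" "UI hb C1 (h @ os)"
    using round_complete[OF assms(1,2) _ assms(4)] assms(3) by auto
  have en: "en C1 (LDn c)" using r(3,4) assms(2) by simp
  have "urun C (ls @ [LDn c]) (eff C1 (LDn c)) (os @ out C1 (LDn c))" using urun_app[OF r(1) urun_one[OF en]] .
  moreover have "out C1 (LDn c) = [RespR c (snd (r_done P c (cst C1 c) (got C1 c)))]" using r(3) by simp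
  ultimately show ?thesis using r(2) by (intro exI[of _ "ls @ [LDn c]"] exI) (auto simp: avoids_def)
qed

lemma solo:
  assumes "UI hb C h" "rdr c" "ph C c \<noteq> Idle" "J \<subseteq> {j0}"
  shows "\<exists>ls C' os u. urun C ls C' os \<and> (\<forall>l\<in>set ls. lcl l = c \<and> avoids J l) \<and> RespR c u \<in> set os"
proof -
  have iv: "INV C c" using assms(1,2) unfolding UI_def by blast
  then have "ph C c = RPh1 \<or> ph C c = RPh2" using assms(3) unfolding INV_def by (cases "ph C c") auto
  then show ?thesis
  proof
    assume p2: "ph C c = RPh2" show ?thesis using solo2[OF assms(1,2) p2 assms(4)] .
  next
    assume p1: "ph C c = RPh1"
    obtain ls C1 os where r: "urun C ls C1 os" "\<forall>l\<in>set ls. lcl l = c \<and> avoids J l" "ph C1 c = RPh1"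
        "card (dom (got C1 c)) = q" "UI hb C1 (h @ os)"
      using round_complete[OF assms(1,2) _ assms(4)] p1 by auto
    have en: "en C1 (LDn c)" using r(3,4) assms(2) by simp
    have u2: "UI hb (eff C1 (LDn c)) ((h @ os) @ out C1 (LDn c))" using UI_pres[OF r(5) en] .
    have p2: "ph (eff C1 (LDn c)) c = RPh2" using r(3) by simp
    obtain ls2 C2 os2 u where r2: "urun (eff C1 (LDn c)) ls2 C2 os2" "\<forall>l\<in>set ls2. lcl l = c \<and> avoids J l" "RespR c u \<in> set os2"
      using solo2[OF u2 assms(2) p2 assms(4)] by blast
    have "urun C (ls @ LDn c # ls2) C2 (os @ out C1 (LDn c) @ os2)"
      using urun_app[OF r(1) urun.cons[OF en r2(1)]] .
    then show ?thesis using r(2) r2(2,3) by (intro exI[of _ "ls @ LDn c # ls2"] exI) (auto simp: avoids_def)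
  qed
qed

end


context ctx begin

definition Out :: "('c, 's, 'm) conf \<Rightarrow> event list \<Rightarrow> nat set" where
  "Out C h = {u. \<exists>ls C' os c. urun C ls C' os \<and> RespR c u \<in> set (h @ os)}"

definition Biv :: "('c, 's, 'm) conf \<Rightarrow> event list \<Rightarrow> bool" where
  "Biv C h \<longleftrightarrow> (\<exists>u1 u2. u1 \<noteq> u2 \<and> u1 \<in> Out C h \<and> u2 \<in> Out C h)"

definition Agr :: "event list \<Rightarrow> bool" where
  "Agr hb \<longleftrightarrow> (\<forall>C h c c' u u'. UI hb C h \<and> RespR c u \<in> set h \<and> RespR c' u' \<in> set h \<longrightarrow> u = u')"

lemma Out_hist:
  assumes "UI hb C h" "Agr hb" "RespR c u \<in> set h"
  shows "Out C h \<subseteq> {u}"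
proof
  fix v assume "v \<in> Out C h"
  then obtain ls C' os c' where r: "urun C ls C' os" "RespR c' v \<in> set (h @ os)" unfolding Out_def by blast
  have U: "UI hb C' (h @ os)" using urun_UI[OF r(1) assms(1)] .
  have hu: "RespR c u \<in> set (h @ os)" using assms(3) by simp
  have "v = u" using assms(2)[unfolded Agr_def, rule_format, OF conjI[OF U conjI[OF r(2) hu]]] .
  then show "v \<in> {u}" by simp
qed

lemma Out_set: "set h = set h' \<Longrightarrow> Out C h = Out C h'"
  unfolding Out_def by auto

lemma Out_step:
  assumes "en C l"
  shows "Out (eff C l) (h @ out C l) \<subseteq> Out C h"
proof
  fix u assume "u \<in> Out (eff C l) (h @ out C l)"
  then obtain ls C' os c where r: "urun (eff C l) ls C' os" "RespR c u \<in> set ((h @ out C l) @ os)" unfolding Out_def by blast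
  have "urun C (l # ls) C' (out C l @ os)" using urun.cons[OF assms r(1)] .
  moreover have "RespR c u \<in> set (h @ (out C l @ os))" using r(2) by simp
  ultimately show "u \<in> Out C h" unfolding Out_def by blast
qed

lemma UI_idle:
  assumes "UI hb C h" "rdr c" "ph C c = Idle"
  shows "\<exists>u. RespR c u \<in> set h"
proof -
  from assms(1) obtain s where s: "h = hb @ s" "\<forall>c. rdr c \<longrightarrow> (ph C c = Idle \<longleftrightarrow> (\<exists>u. RespR c u \<in> set s))"
    unfolding UI_def by blast
  then obtain u where "RespR c u \<in> set s" using assms(2,3) by blast
  then show ?thesis using s(1) by auto
qed

lemma Out_nonempty:
  assumes "UI hb C h"
  shows "\<exists>w. w \<in> Out C h"
proof (cases "ph C (Rd 0) = Idle")
  case True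
  then obtain u where "RespR (Rd 0) u \<in> set h" using UI_idle[OF assms] by (auto simp: rdr_def)
  then have "u \<in> Out C h" unfolding Out_def using urun.nil[of C] by fastforce
  then show ?thesis by blast
next
  case False
  obtain ls C' os u where "urun C ls C' os" "RespR (Rd 0) u \<in> set os"
    using solo[OF assms _ False, of "{}" 0] by (auto simp: rdr_def)
  then have "u \<in> Out C h" unfolding Out_def by fastforce
  then show ?thesis by blast
qed

lemma sim_other:
  assumes "lcl l \<noteq> b" "\<forall>j. isLD l \<and> lsrv l = Some j \<longrightarrow> j \<in> J"
  shows "sim b J C (eff C l)"
  using assms by (cases l) (auto simp: sim_def)

lemma sim_LD_LD:
  assumes "c \<noteq> c'"
  shows "sim c {j} (eff C (LD c j k r m)) (eff C (LD c' j k' r' m'))"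
  using assms by (auto simp: sim_def)

lemma beta:
  assumes "en C l1" "en C l2" "l1 \<noteq> l2" "\<not> indep l1 l2" "ph C (Rd 0) \<noteq> Idle" "ph C (Rd 1) \<noteq> Idle"
  shows "\<exists>c J j0. rdr c \<and> J \<subseteq> {j0} \<and> sim c J (eff C l1) (eff C l2) \<and> ph (eff C l1) c \<noteq> Idle"
proof (cases "lcl l1 = lcl l2")
  case False
  then have "isLD l1 \<and> isLD l2 \<and> lsrv l1 = lsrv l2" using assms(4) unfolding indep_def by blast
  then obtain c j k r m c' k' r' m' where l: "l1 = LD c j k r m" "l2 = LD c' j k' r' m'"
    by (cases l1; cases l2) auto
  have "c \<noteq> c'" using False l by simp
  then have "sim c {j} (eff C l1) (eff C l2)" unfolding l by (rule sim_LD_LD)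
  moreover have "rdr c" "ph (eff C l1) c \<noteq> Idle" using assms(1) l by auto
  ultimately show ?thesis by blast
next
  case True
  let ?a = "lcl l1"
  have ra: "rdr ?a" using assms(1) by (cases l1) auto
  define b where "b = (if ?a = Rd 0 then Rd 1 else Rd 0)"
  have rb: "rdr b" "b \<noteq> ?a" "b \<noteq> lcl l2" using ra True unfolding b_def rdr_def by auto
  have pb: "ph C b \<noteq> Idle" using assms(5,6) unfolding b_def by auto
  have nd: "\<not> isLD l1 \<or> \<not> isLD l2 \<or> lsrv l1 = lsrv l2" using assms(4) True unfolding indep_def by blast
  obtain j0 J where J: "J \<subseteq> {j0}" "\<forall>j. isLD l1 \<and> lsrv l1 = Some j \<longrightarrow> j \<in> J" "\<forall>j. isLD l2 \<and> lsrv l2 = Some j \<longrightarrow> j \<in> J"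
  proof (cases "isLD l1")
    case True
    then obtain j where "lsrv l1 = Some j" by (cases l1) auto
    moreover have "isLD l2 \<longrightarrow> lsrv l2 = Some j" using nd True calculation by auto
    ultimately show ?thesis using that[of "{j}" j] by auto
  next
    case False
    show ?thesis
    proof (cases "isLD l2")
      case True
      then obtain j where "lsrv l2 = Some j" by (cases l2) auto
      then show ?thesis using that[of "{j}" j] False by auto
    next
      case False2: False
      then show ?thesis using that[of "{}" 0] False by auto
    qed
  qed
  have "sim b J C (eff C l1)" using sim_other[OF rb(2)[symmetric]] J(2) by blast
  moreover have "sim b J C (eff C l2)" using sim_other[OF rb(3)[symmetric]] J(3) by blast
  ultimately have "sim b J (eff C l1) (eff C l2)" using sim_sym sim_trans by blast
  moreover have "ph (eff C l1) b \<noteq> Idle" using pb rb(2) ph_eff_other by metis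
  ultimately show ?thesis using rb(1) J(1) by blast
qed

lemma noBiv:
  assumes "UI hb C h" "Agr hb"
  shows "\<not> Biv C h"
  using assms
proof (induction "mu C" arbitrary: C h rule: less_induct)
  case less
  show ?case
  proof
    assume B: "Biv C h"
    have nh: "RespR c u \<notin> set h" for c u
      using Out_hist[OF less.prems(1,2)] B unfolding Biv_def by blast
    have pend: "ph C c \<noteq> Idle" if rc: "rdr c" for c
    proof
      assume "ph C c = Idle"
      then obtain u where "RespR c u \<in> set h" using UI_idle[OF less.prems(1) rc] by blast
      then show False using nh by blast
    qed
    obtain u1 u2 where u: "u1 \<noteq> u2" "u1 \<in> Out C h" "u2 \<in> Out C h" using B unfolding Biv_def by blast
    have first: "\<exists>l. en C l \<and> u \<in> Out (eff C l) (h @ out C l)" if uo: "u \<in> Out C h" for u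
    proof -
      obtain ls C' os c where r: "urun C ls C' os" "RespR c u \<in> set (h @ os)" using uo unfolding Out_def by blast
      show ?thesis
      proof (cases ls)
        case Nil
        then have "os = []" using r(1) by (auto elim: urun.cases)
        then show ?thesis using r(2) nh by simp
      next
        case (Cons l ls')
        then obtain os' where "en C l" "urun (eff C l) ls' C' os'" "os = out C l @ os'" using r(1)
          by (auto elim: urun.cases)
        then show ?thesis using r(2) unfolding Out_def by fastforce
      qed
    qed
    obtain l1 where l1: "en C l1" "u1 \<in> Out (eff C l1) (h @ out C l1)" using first[OF u(2)] by blast
    obtain l2 where l2: "en C l2" "u2 \<in> Out (eff C l2) (h @ out C l2)" using first[OF u(3)] by blast
    let ?C1 = "eff C l1" and ?h1 = "h @ out C l1" and ?C2 = "eff C l2" and ?h2 = "h @ out C l2"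
    have U1: "UI hb ?C1 ?h1" using UI_pres[OF less.prems(1) l1(1)] .
    have U2: "UI hb ?C2 ?h2" using UI_pres[OF less.prems(1) l2(1)] .
    have nb1: "\<not> Biv ?C1 ?h1" using less.hyps[OF mu_dec[OF less.prems(1) l1(1)] U1 less.prems(2)] .
    have nb2: "\<not> Biv ?C2 ?h2" using less.hyps[OF mu_dec[OF less.prems(1) l2(1)] U2 less.prems(2)] .
    have "\<exists>w. w \<in> Out ?C1 ?h1 \<and> w \<in> Out ?C2 ?h2"
    proof (cases "l1 = l2")
      case True
      then show ?thesis using l1 by blast
    next
      case neq: False
      show ?thesis
      proof (cases "indep l1 l2")
        case True
        have i2: "indep l2 l1" using True unfolding indep_def by auto
        have c1: "en ?C1 l2 \<and> eff ?C1 l2 = eff ?C2 l1 \<and> out ?C1 l2 = out C l2" using commute[OF l1(1) l2(1) True] .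
        have c2: "en ?C2 l1 \<and> eff ?C2 l1 = eff ?C1 l2 \<and> out ?C2 l1 = out C l1" using commute[OF l2(1) l1(1) i2] .
        let ?D = "eff ?C1 l2"
        have UD: "UI hb ?D (?h1 @ out ?C1 l2)" using UI_pres[OF U1] c1 by blast
        obtain w where w: "w \<in> Out ?D (?h1 @ out ?C1 l2)" using Out_nonempty[OF UD] by blast
        have "w \<in> Out ?C1 ?h1" using Out_step[of ?C1 l2 ?h1] c1 w by blast
        moreover have "Out ?D (?h1 @ out ?C1 l2) = Out ?D (?h2 @ out ?C2 l1)"
          using c1 c2 by (intro Out_set) auto
        then have "w \<in> Out (eff ?C2 l1) (?h2 @ out ?C2 l1)" using w c2 by simp
        then have "w \<in> Out ?C2 ?h2" using Out_step[of ?C2 l1 ?h2] c2 by blast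
        ultimately show ?thesis by blast
      next
        case False
        obtain c J j0 where cj: "rdr c" "J \<subseteq> {j0}" "sim c J ?C1 ?C2" "ph ?C1 c \<noteq> Idle"
          using beta[OF l1(1) l2(1) neq False] pend by (auto simp: rdr_def)
        obtain ls C' os w where s: "urun ?C1 ls C' os" "\<forall>l\<in>set ls. lcl l = c \<and> avoids J l" "RespR c w \<in> set os"
          using solo[OF U1 cj(1) cj(4) cj(2)] by blast
        obtain C'' where "urun ?C2 ls C'' os" using urun_sim[OF s(1) s(2) cj(3)] by blast
        then have "w \<in> Out ?C2 ?h2" using s(3) unfolding Out_def by fastforce
        moreover have "w \<in> Out ?C1 ?h1" using s(1,3) unfolding Out_def by fastforce
        ultimately show ?thesis by blast
      qed
    qed
    then obtain w where "w \<in> Out ?C1 ?h1" "w \<in> Out ?C2 ?h2" by blast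
    then have "w = u1" "w = u2" using nb1 nb2 l1(2) l2(2) unfolding Biv_def by blast+
    then show False using u(1) by simp
  qed
qed

end



lemma core:
  assumes at: "atomic h" and ne: "i1 \<noteq> i2" and w1: "is_winv (h ! i1)" and w2: "is_winv (h ! i2)"
    and only: "\<forall>i<length h. is_winv (h ! i) \<longrightarrow> i = i1 \<or> i = i2"
    and c1: "completed h i1" and c2: "completed h i2"
  shows "\<exists>w. (w = i1 \<or> w = i2) \<and> (precedes h i1 i2 \<longrightarrow> w = i2) \<and>
     (\<forall>p. is_rinv (h ! p) \<and> completed h p \<and> precedes h i1 p \<and> precedes h i2 p \<longrightarrow> rval (h ! resp_of h p) = wval (h ! w))"
proof -
  obtain pi where d: "distinct pi"
    and s2: "\<forall>i \<in> set pi. i < length h \<and> is_inv (h ! i) \<and> (completed h i \<or> is_winv (h ! i))"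
    and s3: "\<forall>i < length h. is_inv (h ! i) \<and> completed h i \<longrightarrow> i \<in> set pi"
    and s4: "\<forall>a < length pi. \<forall>b < length pi. precedes h (pi ! a) (pi ! b) \<longrightarrow> a < b"
    and s5: "\<forall>a < length pi. is_rinv (h ! (pi ! a)) \<longrightarrow> rval (h ! resp_of h (pi ! a)) = last_written h pi a"
    using at unfolding atomic_def by blast
  have l1: "i1 < length h" using c1 unfolding completed_def by auto
  have l2: "i2 < length h" using c2 unfolding completed_def by auto
  have inv1: "is_inv (h ! i1)" using w1 by (cases "h ! i1") auto
  have inv2: "is_inv (h ! i2)" using w2 by (cases "h ! i2") auto
  have "i1 \<in> set pi" using s3 l1 inv1 c1 by blast
  then obtain a1 where a1: "a1 < length pi" "pi ! a1 = i1" by (auto simp: in_set_conv_nth)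
  have "i2 \<in> set pi" using s3 l2 inv2 c2 by blast
  then obtain a2 where a2: "a2 < length pi" "pi ! a2 = i2" by (auto simp: in_set_conv_nth)
  let ?P = "\<lambda>x. is_winv (h ! x)"
  have nowin: "\<not> ?P x" if "x \<in> set (drop a pi)" "a1 < a" "a2 < a" for x a
  proof
    assume px: "?P x"
    from that(1) obtain b where b: "b < length pi" "a \<le> b" "pi ! b = x"
      by (auto simp: in_set_conv_nth) (metis add.commute le_add2 less_diff_conv)
    have "x < length h" using s2 b by (metis nth_mem)
    then have "x = i1 \<or> x = i2" using only px by blast
    then show False using b a1 a2 d that(2,3) nth_eq_iff_index_eq by (metis leD)
  qed
  have filt: "filter ?P (take a pi) = filter ?P pi" if "a1 < a" "a2 < a" for a
  proof -
    have "filter ?P (drop a pi) = []" using nowin[OF _ that] by (simp add: filter_empty_conv)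
    then show ?thesis by (metis append.right_neutral append_take_drop_id filter_append)
  qed
  define w where "w = last (filter ?P pi)"
  have fne: "filter ?P pi \<noteq> []" using \<open>i1 \<in> set pi\<close> w1 by (metis (mono_tags, lifting) empty_iff filter_empty_conv list.set(1))
  have "w \<in> set (filter ?P pi)" unfolding w_def using fne last_in_set by blast
  then have wi: "w = i1 \<or> w = i2" using s2 only by auto
  have pre: "w = i2" if "precedes h i1 i2"
  proof -
    have lt: "a1 < a2" using s4 a1 a2 that by blast
    have "filter ?P (take (Suc a2) pi) = filter ?P pi" using filt[of "Suc a2"] lt by simp
    moreover have "take (Suc a2) pi = take a2 pi @ [i2]" using a2 by (simp add: take_Suc_conv_app_nth)
    ultimately have "filter ?P pi = filter ?P (take a2 pi) @ [i2]" using w2 by simp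
    then show ?thesis unfolding w_def by simp
  qed
  have rd: "rval (h ! resp_of h p) = wval (h ! w)"
    if p: "is_rinv (h ! p)" "completed h p" "precedes h i1 p" "precedes h i2 p" for p
  proof -
    have lp: "p < length h" using p(2) unfolding completed_def by auto
    have "is_inv (h ! p)" using p(1) by (cases "h ! p") auto
    then have "p \<in> set pi" using s3 lp p(2) by blast
    then obtain a where a: "a < length pi" "pi ! a = p" by (auto simp: in_set_conv_nth)
    have "a1 < a" using s4 a1 a p(3) by blast
    moreover have "a2 < a" using s4 a2 a p(4) by blast
    ultimately have "filter ?P (take a pi) = filter ?P pi" by (rule filt)
    then have "last_written h pi a = wval (h ! w)" unfolding last_written_def w_def using fne by simp
    then show ?thesis using s5 a p(1) by metis
  qed
  show ?thesis using wi pre rd by blast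
qed




lemma resp_lem:
  assumes "i < j" "j < length h" "ev_client (h ! j) = ev_client (h ! i)"
    "\<forall>k. i < k \<and> k < j \<longrightarrow> ev_client (h ! k) \<noteq> ev_client (h ! i)"
  shows "completed h i \<and> resp_of h i = j"
proof
  show "completed h i" using assms unfolding completed_def by blast
  show "resp_of h i = j" unfolding resp_of_def
    by (rule Least_equality) (use assms in \<open>auto simp: not_less[symmetric]\<close>)
qed

definition hbc :: "event list" where
  "hbc = [InvW (Wr 0) 1, InvW (Wr 1) 2, RespW (Wr 0), RespW (Wr 1), InvR (Rd 0), InvR (Rd 1)]"
definition hb12 :: "event list" where
  "hb12 = [InvW (Wr 0) 1, RespW (Wr 0), InvW (Wr 1) 2, RespW (Wr 1), InvR (Rd 0), InvR (Rd 1)]"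
definition hb21 :: "event list" where
  "hb21 = [InvW (Wr 1) 2, RespW (Wr 1), InvW (Wr 0) 1, RespW (Wr 0), InvR (Rd 0), InvR (Rd 1)]"

lemma lt4: "(i::nat) < 4 \<Longrightarrow> i = 0 \<or> i = 1 \<or> i = 2 \<or> i = 3" by arith

lemma k_cases: "(a::nat) < k \<Longrightarrow> k < b \<Longrightarrow> b \<le> a + 3 \<Longrightarrow> k = a + 1 \<or> k = a + 2"
  by arith

context ctx begin

lemma read_pos:
  assumes h: "h = [e0,e1,e2,e3,InvR (Rd 0), InvR (Rd 1)] @ s" and sh: "shp s" and m: "RespR c u \<in> set s"
  shows "\<exists>p. (p = 4 \<or> p = 5) \<and> is_rinv (h ! p) \<and> completed h p \<and> rval (h ! resp_of h p) = u"
proof -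
  have A: "\<exists>p. (p = 4 \<or> p = 5) \<and> is_rinv (h ! p) \<and> completed h p \<and> rval (h ! resp_of h p) = u"
    if "h ! p = InvR c'" "p = 4 \<or> p = 5" "p < j" "j < length h" "h ! j = RespR c' u"
       "\<forall>k. p < k \<and> k < j \<longrightarrow> ev_client (h ! k) \<noteq> c'" for p j c'
  proof -
    have "completed h p \<and> resp_of h p = j" using that by (intro resp_lem) auto
    then show ?thesis using that by auto
  qed
  from sh m consider
      (a) "s = [RespR (Rd 0) u]" "c = Rd 0" | (b) "s = [RespR (Rd 1) u]" "c = Rd 1"
    | (c) x where "s = [RespR (Rd 0) u, RespR (Rd 1) x]" "c = Rd 0"
    | (d) x where "s = [RespR (Rd 0) x, RespR (Rd 1) u]" "c = Rd 1"
    | (e) x where "s = [RespR (Rd 1) u, RespR (Rd 0) x]" "c = Rd 1"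
    | (f) x where "s = [RespR (Rd 1) x, RespR (Rd 0) u]" "c = Rd 0"
    unfolding shp_def rdr_def by auto
  then show ?thesis
  proof cases
    case a then show ?thesis using h by (intro A[of 4 "Rd 0" 6]) auto
  next
    case b then show ?thesis using h by (intro A[of 5 "Rd 1" 6]) auto
  next
    case c then show ?thesis using h by (intro A[of 4 "Rd 0" 6]) auto
  next
    case d
    have "ev_client (h ! k) \<noteq> Rd 1" if "5 < k" "k < 7" for k
      using k_cases[of 5 k 7] that d h by auto
    then show ?thesis using h d by (intro A[of 5 "Rd 1" 7]) auto
  next
    case e then show ?thesis using h by (intro A[of 5 "Rd 1" 6]) auto
  next
    case f
    have "ev_client (h ! k) \<noteq> Rd 0" if "4 < k" "k < 7" for k
    proof -
      have "k = 5 \<or> k = 6" using that by arith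
      then show ?thesis using f h by auto
    qed
    then show ?thesis using h f by (intro A[of 4 "Rd 0" 7]) auto
  qed
qed

lemma Agr_core:
  assumes U: "UI hb C h" and hb: "hb = [e0,e1,e2,e3,InvR (Rd 0), InvR (Rd 1)]"
    and ne: "i1 \<noteq> i2" and i4: "i1 < 4" "i2 < 4" and w: "is_winv (hb ! i1)" "is_winv (hb ! i2)"
    and only: "\<forall>i<4. is_winv (hb ! i) \<longrightarrow> i = i1 \<or> i = i2"
    and rs: "\<And>s. completed (hb @ s) i1 \<and> resp_of (hb @ s) i1 < 4" "\<And>s. completed (hb @ s) i2 \<and> resp_of (hb @ s) i2 < 4"
    and nr: "\<forall>c u. RespR c u \<notin> set hb"
  shows "\<exists>w. (w = i1 \<or> w = i2) \<and> (precedes h i1 i2 \<longrightarrow> w = i2) \<and> (\<forall>c u. RespR c u \<in> set h \<longrightarrow> u = wval (h ! w))"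
proof -
  obtain s where s: "h = hb @ s" "shp s" using U unfolding UI_def by blast
  have at: "atomic h" using U atom unfolding UI_def by blast
  have sR: "\<forall>e\<in>set s. \<exists>c u. e = RespR c u" using s(2) unfolding shp_def by auto
  have lh: "length hb = 6" using hb by simp
  have hn: "h ! i = hb ! i" if "i < 6" for i unfolding s(1) using that lh by (simp add: nth_append)
  have only': "\<forall>i<length h. is_winv (h ! i) \<longrightarrow> i = i1 \<or> i = i2"
  proof (intro allI impI)
    fix i assume i: "i < length h" "is_winv (h ! i)"
    show "i = i1 \<or> i = i2"
    proof (cases "i < 4")
      case True
      have "h ! i = hb ! i" using True hn by simp
      then show ?thesis using only i True by auto
    next
      case False
      show ?thesis
      proof (cases "i < 6")
        case True
        then have "i = 4 \<or> i = 5" using False by arith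
        then have "h ! i = InvR (Rd 0) \<or> h ! i = InvR (Rd 1)" using hn[of 4] hn[of 5] hb by auto
        then show ?thesis using i(2) by auto
      next
        case False2: False
        have "length h = 6 + length s" unfolding s(1) using lh by simp
        then have il: "i - 6 < length s" using i(1) False2 by linarith
        have "h ! i = s ! (i - 6)" unfolding s(1) using False2 lh by (simp add: nth_append)
        then have "h ! i \<in> set s" using il nth_mem by metis
        then show ?thesis using sR i(2) by fastforce
      qed
    qed
  qed
  have w': "is_winv (h ! i1)" "is_winv (h ! i2)" using w i4 hn by auto
  obtain w where wc: "w = i1 \<or> w = i2" "precedes h i1 i2 \<longrightarrow> w = i2"
    "\<forall>p. is_rinv (h ! p) \<and> completed h p \<and> precedes h i1 p \<and> precedes h i2 p \<longrightarrow> rval (h ! resp_of h p) = wval (h ! w)"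
    using core[OF at ne w' only'] rs(1)[of s] rs(2)[of s] unfolding s(1)[symmetric] by blast
  have "u = wval (h ! w)" if m: "RespR c u \<in> set h" for c u
  proof -
    have "RespR c u \<in> set s" using m nr s(1) by auto
    then obtain p where p: "p = 4 \<or> p = 5" "is_rinv (h ! p)" "completed h p" "rval (h ! resp_of h p) = u"
      using read_pos[OF _ s(2), of h e0 e1 e2 e3] s(1) hb by blast
    have rs1: "completed h i1 \<and> resp_of h i1 < 4" "completed h i2 \<and> resp_of h i2 < 4"
      using rs(1)[of s] rs(2)[of s] unfolding s(1)[symmetric] by blast+
    have "precedes h i1 p" "precedes h i2 p" using rs1 p(1) unfolding precedes_def by auto
    then show ?thesis using wc(3) p by auto
  qed
  then show ?thesis using wc(1,2) by blast
qed

lemma only_hbc: "\<forall>i<4. is_winv (hbc ! i) \<longrightarrow> i = 0 \<or> i = 1"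
  using lt4 by (force simp: hbc_def)
lemma only_hb12: "\<forall>i<4. is_winv (hb12 ! i) \<longrightarrow> i = 0 \<or> i = 2"
  using lt4 by (force simp: hb12_def)
lemma only_hb21: "\<forall>i<4. is_winv (hb21 ! i) \<longrightarrow> i = 0 \<or> i = 2"
  using lt4 by (force simp: hb21_def)
lemma nr_hbc: "\<forall>c u. RespR c u \<notin> set hbc" by (simp add: hbc_def)
lemma nr_hb12: "\<forall>c u. RespR c u \<notin> set hb12" by (simp add: hb12_def)
lemma nr_hb21: "\<forall>c u. RespR c u \<notin> set hb21" by (simp add: hb21_def)

lemma Agr_hbc: "Agr hbc"
  unfolding Agr_def
proof (intro allI impI, elim conjE)
  fix C h c c' u u' assume U: "UI hbc C h" and m: "RespR c u \<in> set h" "RespR c' u' \<in> set h"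
  have r0: "completed (hbc @ s) 0 \<and> resp_of (hbc @ s) 0 = 2" for s
  proof (rule resp_lem)
    show "\<forall>k. 0 < k \<and> k < 2 \<longrightarrow> ev_client ((hbc @ s) ! k) \<noteq> ev_client ((hbc @ s) ! 0)"
    proof (intro allI impI)
      fix k assume "0 < k \<and> k < (2::nat)"
      then have "k = 1" by arith
      then show "ev_client ((hbc @ s) ! k) \<noteq> ev_client ((hbc @ s) ! 0)" by (simp add: hbc_def)
    qed
  qed (simp_all add: hbc_def)
  have r1: "completed (hbc @ s) 1 \<and> resp_of (hbc @ s) 1 = 3" for s
  proof (rule resp_lem)
    show "\<forall>k. 1 < k \<and> k < 3 \<longrightarrow> ev_client ((hbc @ s) ! k) \<noteq> ev_client ((hbc @ s) ! 1)"
    proof (intro allI impI)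
      fix k assume "1 < k \<and> k < (3::nat)"
      then have "k = 2" by arith
      then show "ev_client ((hbc @ s) ! k) \<noteq> ev_client ((hbc @ s) ! 1)" by (simp add: hbc_def)
    qed
  qed (simp_all add: hbc_def)
  obtain w where "\<forall>c u. RespR c u \<in> set h \<longrightarrow> u = wval (h ! w)"
    using Agr_core[OF U hbc_def, of 0 1] r0 r1 only_hbc nr_hbc by (auto simp: hbc_def)
  then show "u = u'" using m by metis
qed

lemma Agr_hb12: "Agr hb12" and forced12: "UI hb12 C h \<Longrightarrow> RespR c u \<in> set h \<Longrightarrow> u = 2"
proof -
  have r0: "completed (hb12 @ s) 0 \<and> resp_of (hb12 @ s) 0 = 1" for s
  proof (rule resp_lem)
    show "\<forall>k. 0 < k \<and> k < 1 \<longrightarrow> ev_client ((hb12 @ s) ! k) \<noteq> ev_client ((hb12 @ s) ! 0)"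
    proof (intro allI impI)
      fix k assume "0 < k \<and> k < (1::nat)"
      then have False by linarith
      then show "ev_client ((hb12 @ s) ! k) \<noteq> ev_client ((hb12 @ s) ! 0)" by simp
    qed
  qed (simp_all add: hb12_def)
  have r1: "completed (hb12 @ s) 2 \<and> resp_of (hb12 @ s) 2 = 3" for s
  proof (rule resp_lem)
    show "\<forall>k. 2 < k \<and> k < 3 \<longrightarrow> ev_client ((hb12 @ s) ! k) \<noteq> ev_client ((hb12 @ s) ! 2)"
    proof (intro allI impI)
      fix k assume "2 < k \<and> k < (3::nat)"
      then have False by linarith
      then show "ev_client ((hb12 @ s) ! k) \<noteq> ev_client ((hb12 @ s) ! 2)" by simp
    qed
  qed (simp_all add: hb12_def)
  have F: "u = 2" if U: "UI hb12 C h" and m: "RespR c u \<in> set h" for C h c u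
  proof -
    obtain s where s: "h = hb12 @ s" using U unfolding UI_def by blast
    have pr: "precedes h 0 2" using r0[of s] s unfolding precedes_def by simp
    obtain w where "w = 2" "\<forall>c u. RespR c u \<in> set h \<longrightarrow> u = wval (h ! w)"
      using Agr_core[OF U hb12_def, of 0 2] r0 r1 pr only_hb12 nr_hb12 by (auto simp: hb12_def)
    then show ?thesis using m s by (auto simp: hb12_def)
  qed
  show "Agr hb12" unfolding Agr_def using F by metis
  show "UI hb12 C h \<Longrightarrow> RespR c u \<in> set h \<Longrightarrow> u = 2" using F by blast
qed

lemma Agr_hb21: "Agr hb21" and forced21: "UI hb21 C h \<Longrightarrow> RespR c u \<in> set h \<Longrightarrow> u = 1"
proof -
  have r0: "completed (hb21 @ s) 0 \<and> resp_of (hb21 @ s) 0 = 1" for s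
  proof (rule resp_lem)
    show "\<forall>k. 0 < k \<and> k < 1 \<longrightarrow> ev_client ((hb21 @ s) ! k) \<noteq> ev_client ((hb21 @ s) ! 0)"
    proof (intro allI impI)
      fix k assume "0 < k \<and> k < (1::nat)"
      then have False by linarith
      then show "ev_client ((hb21 @ s) ! k) \<noteq> ev_client ((hb21 @ s) ! 0)" by simp
    qed
  qed (simp_all add: hb21_def)
  have r1: "completed (hb21 @ s) 2 \<and> resp_of (hb21 @ s) 2 = 3" for s
  proof (rule resp_lem)
    show "\<forall>k. 2 < k \<and> k < 3 \<longrightarrow> ev_client ((hb21 @ s) ! k) \<noteq> ev_client ((hb21 @ s) ! 2)"
    proof (intro allI impI)
      fix k assume "2 < k \<and> k < (3::nat)"
      then have False by linarith
      then show "ev_client ((hb21 @ s) ! k) \<noteq> ev_client ((hb21 @ s) ! 2)" by simp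
    qed
  qed (simp_all add: hb21_def)
  have F: "u = 1" if U: "UI hb21 C h" and m: "RespR c u \<in> set h" for C h c u
  proof -
    obtain s where s: "h = hb21 @ s" using U unfolding UI_def by blast
    have pr: "precedes h 0 2" using r0[of s] s unfolding precedes_def by simp
    obtain w where "w = 2" "\<forall>c u. RespR c u \<in> set h \<longrightarrow> u = wval (h ! w)"
      using Agr_core[OF U hb21_def, of 0 2] r0 r1 pr only_hb21 nr_hb21 by (auto simp: hb21_def)
    then show ?thesis using m s by (auto simp: hb21_def)
  qed
  show "Agr hb21" unfolding Agr_def using F by metis
  show "UI hb21 C h \<Longrightarrow> RespR c u \<in> set h \<Longrightarrow> u = 1" using F by blast
qed

end


context ctx begin

lemma deliver_list:
  assumes "reach S t W R P C h" "distinct js" "\<forall>j\<in>set js. (c,j,k,r,M j) \<in> reqs C"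
  shows "\<exists>C'. reach S t W R P C' h \<and> (\<forall>j. sst C' j = (if j \<in> set js then fst (srv_step P j (sst C j) c (M j)) else sst C j))
     \<and> (\<forall>j\<in>set js. (j,c,k,r,snd (srv_step P j (sst C j) c (M j))) \<in> reps C') \<and> reps C \<subseteq> reps C'
     \<and> (\<forall>x\<in>reps C'. x \<in> reps C \<or> fst (snd x) = c)
     \<and> reqs C' \<subseteq> reqs C \<and> (\<forall>x\<in>reqs C. fst x \<noteq> c \<or> fst (snd x) \<notin> set js \<longrightarrow> x \<in> reqs C')
     \<and> cst C' = cst C \<and> ph C' = ph C \<and> opn C' = opn C \<and> got C' = got C"
  using assms
proof (induction js arbitrary: C)
  case Nil
  then show ?case by (intro exI[of _ C]) auto
next
  case (Cons j js)
  obtain s' m' where sm: "srv_step P j (sst C j) c (M j) = (s', m')" by fastforce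
  let ?C1 = "C\<lparr> sst := (sst C)(j := s'), reqs := reqs C - {(c, j, k, r, M j)},
           reps := reps C \<union> {(j, c, k, r, m')} \<rparr>"
  have mem: "(c,j,k,r,M j) \<in> reqs C" using Cons.prems(3) by simp
  have r1: "reach S t W R P ?C1 h" using reach.deliver[OF Cons.prems(1) mem sm] .
  have rq: "\<forall>j'\<in>set js. (c,j',k,r,M j') \<in> reqs ?C1"
  proof
    fix j' assume j': "j' \<in> set js"
    then have "j' \<noteq> j" using Cons.prems(2) by auto
    moreover have "(c,j',k,r,M j') \<in> reqs C" using Cons.prems(3) j' by simp
    ultimately show "(c,j',k,r,M j') \<in> reqs ?C1" by simp
  qed
  have d: "distinct js" using Cons.prems(2) by simp
  note ih = Cons.IH[OF r1 d rq]
  obtain C' where C': "reach S t W R P C' h" "\<forall>j'. sst C' j' = (if j' \<in> set js then fst (srv_step P j' (sst ?C1 j') c (M j')) else sst ?C1 j')"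
     "\<forall>j'\<in>set js. (j',c,k,r,snd (srv_step P j' (sst ?C1 j') c (M j'))) \<in> reps C'" "reps ?C1 \<subseteq> reps C'"
     "\<forall>x\<in>reps C'. x \<in> reps ?C1 \<or> fst (snd x) = c"
     "reqs C' \<subseteq> reqs ?C1" "\<forall>x\<in>reqs ?C1. fst x \<noteq> c \<or> fst (snd x) \<notin> set js \<longrightarrow> x \<in> reqs C'"
     "cst C' = cst ?C1" "ph C' = ph ?C1" "opn C' = opn ?C1" "got C' = got ?C1"
    using ih by (elim exE conjE) (rule that; assumption)
  have jn: "j \<notin> set js" using Cons.prems(2) by simp
  show ?case
  proof (intro exI[of _ C'] conjI)
    show "\<forall>j'. sst C' j' = (if j' \<in> set (j # js) then fst (srv_step P j' (sst C j') c (M j')) else sst C j')"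
    proof
      fix j'
      show "sst C' j' = (if j' \<in> set (j # js) then fst (srv_step P j' (sst C j') c (M j')) else sst C j')"
      proof (cases "j' = j")
        case True
        then have "sst C' j' = s'" using C'(2) jn by simp
        then show ?thesis using True sm by simp
      next
        case False
        then have "sst ?C1 j' = sst C j'" by simp
        then show ?thesis using C'(2) False by simp
      qed
    qed
    show "\<forall>j'\<in>set (j # js). (j',c,k,r,snd (srv_step P j' (sst C j') c (M j'))) \<in> reps C'"
    proof
      fix j' assume j': "j' \<in> set (j # js)"
      show "(j',c,k,r,snd (srv_step P j' (sst C j') c (M j'))) \<in> reps C'"
      proof (cases "j' = j")
        case True
        then show ?thesis using C'(4) sm by auto
      next
        case False
        then have "j' \<in> set js" "sst ?C1 j' = sst C j'" using j' by auto
        then show ?thesis using C'(3) by metis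
      qed
    qed
    show "\<forall>x\<in>reqs C. fst x \<noteq> c \<or> fst (snd x) \<notin> set (j # js) \<longrightarrow> x \<in> reqs C'"
    proof (intro ballI impI)
      fix x assume x: "x \<in> reqs C" "fst x \<noteq> c \<or> fst (snd x) \<notin> set (j # js)"
      then have "x \<noteq> (c, j, k, r, M j)" by auto
      then have "x \<in> reqs ?C1" using x(1) by simp
      moreover have "fst x \<noteq> c \<or> fst (snd x) \<notin> set js" using x(2) by auto
      ultimately show "x \<in> reqs C'" using C'(7) by blast
    qed
    show "reach S t W R P C' h" using C'(1) .
    show "reps C \<subseteq> reps C'" using C'(4) by auto
    show "\<forall>x\<in>reps C'. x \<in> reps C \<or> fst (snd x) = c" using C'(5) by auto
    show "reqs C' \<subseteq> reqs C" using C'(6) by auto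
    show "cst C' = cst C" "ph C' = ph C" "opn C' = opn C" "got C' = got C" using C'(8-11) by simp_all
  qed
qed

lemma collect_list:
  assumes "reach S t W R P C h" "ph C c = WPh v" "n \<le> q" "got C c = Map.empty"
    "\<forall>j<n. \<exists>m. (j,c,opn C c, 1, m) \<in> reps C"
  shows "\<exists>C'. reach S t W R P C' h \<and> dom (got C' c) = {..<n} \<and> sst C' = sst C \<and> reqs C' = reqs C
     \<and> reps C' \<subseteq> reps C \<and> (\<forall>x\<in>reps C. fst (snd x) \<noteq> c \<or> fst x \<ge> n \<longrightarrow> x \<in> reps C')
     \<and> cst C' = cst C \<and> ph C' = ph C \<and> opn C' = opn C \<and> (\<forall>c'. c' \<noteq> c \<longrightarrow> got C' c' = got C c')"
  using assms
proof (induction n)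
  case 0
  then show ?case by (intro exI[of _ C]) auto
next
  case (Suc n)
  obtain C' where C': "reach S t W R P C' h" "dom (got C' c) = {..<n}" "sst C' = sst C" "reqs C' = reqs C"
     "reps C' \<subseteq> reps C" "\<forall>x\<in>reps C. fst (snd x) \<noteq> c \<or> fst x \<ge> n \<longrightarrow> x \<in> reps C'"
     "cst C' = cst C" "ph C' = ph C" "opn C' = opn C" "\<forall>c'. c' \<noteq> c \<longrightarrow> got C' c' = got C c'"
  proof -
    have a: "n \<le> q" using Suc.prems(3) by simp
    have b: "\<forall>j<n. \<exists>m. (j,c,opn C c, 1, m) \<in> reps C" using Suc.prems(5) by simp
    show ?thesis using Suc.IH[OF Suc.prems(1,2) a Suc.prems(4) b] by (elim exE conjE) (rule that; assumption)
  qed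
  obtain m where m: "(n,c,opn C c, 1, m) \<in> reps C" using Suc.prems(5) by auto
  have m': "(n,c,opn C' c, 1, m) \<in> reps C'" using C'(6,9) m by auto
  have cd: "card (dom (got C' c)) < q" using C'(2) Suc.prems(3) by simp
  let ?C2 = "C'\<lparr> reps := reps C' - {(n, c, opn C' c, 1, m)}, got := (got C')(c := (got C' c)(n \<mapsto> m)) \<rparr>"
  have r2: "reach S t W R P ?C2 h"
    using reach.recv[OF C'(1) m'] cd C'(8) Suc.prems(2) by simp
  show ?case
  proof (intro exI[of _ ?C2] conjI)
    show "dom (got ?C2 c) = {..<Suc n}" using C'(2) by auto
    show "\<forall>x\<in>reps C. fst (snd x) \<noteq> c \<or> Suc n \<le> fst x \<longrightarrow> x \<in> reps ?C2" using C'(6) by auto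
    show "reach S t W R P ?C2 h" using r2 .
    show "sst ?C2 = sst C" "reqs ?C2 = reqs C" "cst ?C2 = cst C" "ph ?C2 = ph C" "opn ?C2 = opn C"
      using C' by simp_all
    show "reps ?C2 \<subseteq> reps C" using C'(5) by auto
    show "\<forall>c'. c' \<noteq> c \<longrightarrow> got ?C2 c' = got C c'" using C'(10) by simp
  qed
qed

lemma collect_done:
  assumes "reach S t W R P C h" "ph C c = WPh v" "got C c = Map.empty"
    "\<forall>j<q. \<exists>m. (j,c,opn C c, 1, m) \<in> reps C"
  shows "\<exists>C'. reach S t W R P C' (h @ [RespW c]) \<and> sst C' = sst C \<and> reqs C' = reqs C
     \<and> reps C' \<subseteq> reps C \<and> (\<forall>x\<in>reps C. fst (snd x) \<noteq> c \<longrightarrow> x \<in> reps C')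
     \<and> ph C' = (ph C)(c := Idle) \<and> opn C' = opn C \<and> (\<forall>c'. c' \<noteq> c \<longrightarrow> cst C' c' = cst C c' \<and> got C' c' = got C c')"
proof -
  obtain C' where C': "reach S t W R P C' h" "dom (got C' c) = {..<q}" "sst C' = sst C" "reqs C' = reqs C"
     "reps C' \<subseteq> reps C" "\<forall>x\<in>reps C. fst (snd x) \<noteq> c \<or> fst x \<ge> q \<longrightarrow> x \<in> reps C'"
     "cst C' = cst C" "ph C' = ph C" "opn C' = opn C" "\<forall>c'. c' \<noteq> c \<longrightarrow> got C' c' = got C c'"
    using collect_list[OF assms(1,2) le_refl assms(3,4)] by (elim exE conjE) (rule that; assumption)
  have "card (dom (got C' c)) = q" using C'(2) by simp
  then have r: "reach S t W R P (C'\<lparr> ph := (ph C')(c := Idle), cst := (cst C')(c := w_done P c (cst C' c) v (got C' c)) \<rparr>) (h @ [RespW c])"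
    using reach.done_w[OF C'(1)] C'(8) assms(2) by simp
  show ?thesis
  proof (rule exI, intro conjI)
    show "reach S t W R P (C'\<lparr> ph := (ph C')(c := Idle), cst := (cst C')(c := w_done P c (cst C' c) v (got C' c)) \<rparr>) (h @ [RespW c])" using r .
  qed (use C'(3,4,5,6,7,8,9,10) in auto)
qed

end


context ctx begin

definition RD :: "('c, 's, 'm) conf \<Rightarrow> bool" where
  "RD C \<longleftrightarrow> (\<forall>i. cst C (Rd i) = cl_init P (Rd i) \<and> ph C (Rd i) = Idle \<and> opn C (Rd i) = 0 \<and> got C (Rd i) = Map.empty
     \<and> (\<forall>j k r m. (Rd i,j,k,r,m) \<notin> reqs C \<and> (j,Rd i,k,r,m) \<notin> reps C))"

lemma RD_init: "RD (init_conf P)" by (simp add: RD_def init_conf_def)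

lemma qS: "q < S" using S2 t1 by linarith

lemma inv_w_step:
  assumes "reach S t W R P C h" "i < W" "ph C (Wr i) = Idle"
  shows "reach S t W R P (C\<lparr> ph := (ph C)(Wr i := WPh v), opn := (opn C)(Wr i := Suc (opn C (Wr i))),
           got := (got C)(Wr i := Map.empty),
           reqs := reqs C \<union> {(Wr i, j, Suc (opn C (Wr i)), 1, w_req P (Wr i) (cst C (Wr i)) v j) | j. j < S} \<rparr>)
       (h @ [InvW (Wr i) v])"
  using reach.inv_w[OF assms] .

lemma one_write:
  assumes r: "reach S t W R P C h" and rd: "RD C" and i: "i < W" and p: "ph C (Wr i) = Idle"
    and cs: "cst C (Wr i) = cl_init P (Wr i)" and o: "opn C (Wr i) = 0"
  shows "\<exists>C'. reach S t W R P C' (h @ [InvW (Wr i) v, RespW (Wr i)]) \<and> RD C'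
     \<and> (\<forall>j. sst C' j = (if j < S then fst (srv_step P j (sst C j) (Wr i) (w_req P (Wr i) (cl_init P (Wr i)) v j)) else sst C j))
     \<and> (\<forall>c. c \<noteq> Wr i \<longrightarrow> cst C' c = cst C c \<and> ph C' c = ph C c \<and> opn C' c = opn C c)"
proof -
  let ?M = "\<lambda>j. w_req P (Wr i) (cl_init P (Wr i)) v j"
  let ?C1 = "C\<lparr> ph := (ph C)(Wr i := WPh v), opn := (opn C)(Wr i := Suc (opn C (Wr i))),
           got := (got C)(Wr i := Map.empty),
           reqs := reqs C \<union> {(Wr i, j, Suc (opn C (Wr i)), 1, w_req P (Wr i) (cst C (Wr i)) v j) | j. j < S} \<rparr>"
  have r1: "reach S t W R P ?C1 (h @ [InvW (Wr i) v])" using inv_w_step[OF r i p] .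
  have rq: "\<forall>j\<in>set [0..<S]. (Wr i, j, 1, 1, ?M j) \<in> reqs ?C1" using cs o by auto
  obtain C2 where C2: "reach S t W R P C2 (h @ [InvW (Wr i) v])"
    "\<forall>j. sst C2 j = (if j \<in> set [0..<S] then fst (srv_step P j (sst ?C1 j) (Wr i) (?M j)) else sst ?C1 j)"
    "\<forall>j\<in>set [0..<S]. (j,Wr i,1,1,snd (srv_step P j (sst ?C1 j) (Wr i) (?M j))) \<in> reps C2" "reps ?C1 \<subseteq> reps C2"
    "\<forall>x\<in>reps C2. x \<in> reps ?C1 \<or> fst (snd x) = Wr i"
    "reqs C2 \<subseteq> reqs ?C1" "\<forall>x\<in>reqs ?C1. fst x \<noteq> Wr i \<or> fst (snd x) \<notin> set [0..<S] \<longrightarrow> x \<in> reqs C2"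
    "cst C2 = cst ?C1" "ph C2 = ph ?C1" "opn C2 = opn ?C1" "got C2 = got ?C1"
    using deliver_list[OF r1 distinct_upt rq] by (elim exE conjE) (rule that; assumption)
  have p2: "ph C2 (Wr i) = WPh v" "got C2 (Wr i) = Map.empty" "opn C2 (Wr i) = 1" using C2(9,10,11) o by auto
  have rp: "\<forall>j<q. \<exists>m. (j, Wr i, opn C2 (Wr i), 1, m) \<in> reps C2" using C2(3) p2(3) qS by auto
  obtain C3 where C3: "reach S t W R P C3 ((h @ [InvW (Wr i) v]) @ [RespW (Wr i)])" "sst C3 = sst C2" "reqs C3 = reqs C2"
     "reps C3 \<subseteq> reps C2" "\<forall>x\<in>reps C2. fst (snd x) \<noteq> Wr i \<longrightarrow> x \<in> reps C3"
     "ph C3 = (ph C2)(Wr i := Idle)" "opn C3 = opn C2" "\<forall>c'. c' \<noteq> Wr i \<longrightarrow> cst C3 c' = cst C2 c' \<and> got C3 c' = got C2 c'"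
    using collect_done[OF C2(1) p2(1,2) rp] by (elim exE conjE) (rule that; assumption)
  show ?thesis
  proof (intro exI[of _ C3] conjI)
    show "reach S t W R P C3 (h @ [InvW (Wr i) v, RespW (Wr i)])" using C3(1) by simp
    show "\<forall>j. sst C3 j = (if j < S then fst (srv_step P j (sst C j) (Wr i) (?M j)) else sst C j)"
      using C3(2) C2(2) by simp
    show "\<forall>c. c \<noteq> Wr i \<longrightarrow> cst C3 c = cst C c \<and> ph C3 c = ph C c \<and> opn C3 c = opn C c"
      using C3(6,7,8) C2(8,9,10) by simp
    show "RD C3" unfolding RD_def
    proof (intro allI conjI)
      fix i' j k r m
      show "cst C3 (Rd i') = cl_init P (Rd i')" "ph C3 (Rd i') = Idle" "opn C3 (Rd i') = 0" "got C3 (Rd i') = Map.empty"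
        using C3(6,7,8) C2(8,9,10,11) rd unfolding RD_def by auto
      show "(Rd i', j, k, r, m) \<notin> reqs C3" using C3(3) C2(6) rd unfolding RD_def by auto
      show "(j, Rd i', k, r, m) \<notin> reps C3" using C3(4) C2(5) rd unfolding RD_def by fastforce
    qed
  qed
qed

lemma RD_frame:
  assumes "RD C" "\<forall>i. c \<noteq> Rd i" "\<forall>i. cst C' (Rd i) = cst C (Rd i) \<and> ph C' (Rd i) = ph C (Rd i) \<and> opn C' (Rd i) = opn C (Rd i) \<and> got C' (Rd i) = got C (Rd i)"
    "\<forall>x\<in>reqs C'. x \<in> reqs C \<or> fst x = c" "\<forall>x\<in>reps C'. x \<in> reps C \<or> fst (snd x) = c"
  shows "RD C'"
  unfolding RD_def
proof (intro allI conjI)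
  fix i j k r m
  show "cst C' (Rd i) = cl_init P (Rd i)" "ph C' (Rd i) = Idle" "opn C' (Rd i) = 0" "got C' (Rd i) = Map.empty"
    using assms(1,3) unfolding RD_def by auto
  show "(Rd i, j, k, r, m) \<notin> reqs C'" using assms(1,2,4) unfolding RD_def by fastforce
  show "(j, Rd i, k, r, m) \<notin> reps C'" using assms(1,2,5) unfolding RD_def by fastforce
qed

definition M0 :: "nat \<Rightarrow> 'm" where "M0 j = w_req P (Wr 0) (cl_init P (Wr 0)) 1 j"
definition M1 :: "nat \<Rightarrow> 'm" where "M1 j = w_req P (Wr 1) (cl_init P (Wr 1)) 2 j"
definition AA :: "nat \<Rightarrow> 's" where
  "AA j = fst (srv_step P j (fst (srv_step P j (srv_init P j) (Wr 0) (M0 j))) (Wr 1) (M1 j))"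
definition BB :: "nat \<Rightarrow> 's" where
  "BB j = fst (srv_step P j (fst (srv_step P j (srv_init P j) (Wr 1) (M1 j))) (Wr 0) (M0 j))"
definition pat :: "nat \<Rightarrow> nat \<Rightarrow> 's" where
  "pat k j = (if j < S then (if j < k then BB j else AA j) else srv_init P j)"

lemma seq_write:
  assumes "i1 < W" "i2 < W" "i1 \<noteq> i2"
  shows "\<exists>C. reach S t W R P C [InvW (Wr i1) v1, RespW (Wr i1), InvW (Wr i2) v2, RespW (Wr i2)] \<and> RD C
    \<and> (\<forall>j. sst C j = (if j < S then fst (srv_step P j (fst (srv_step P j (srv_init P j) (Wr i1) (w_req P (Wr i1) (cl_init P (Wr i1)) v1 j)))
                          (Wr i2) (w_req P (Wr i2) (cl_init P (Wr i2)) v2 j)) else srv_init P j))"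
proof -
  have r0: "reach S t W R P (init_conf P) []" by (rule reach.init)
  have ini: "ph (init_conf P) (Wr i1) = Idle" "cst (init_conf P) (Wr i1) = cl_init P (Wr i1)" "opn (init_conf P) (Wr i1) = 0"
    by (simp_all add: init_conf_def)
  obtain C1 where C1: "reach S t W R P C1 ([] @ [InvW (Wr i1) v1, RespW (Wr i1)])" "RD C1"
     "\<forall>j. sst C1 j = (if j < S then fst (srv_step P j (sst (init_conf P) j) (Wr i1) (w_req P (Wr i1) (cl_init P (Wr i1)) v1 j)) else sst (init_conf P) j)"
     "\<forall>c. c \<noteq> Wr i1 \<longrightarrow> cst C1 c = cst (init_conf P) c \<and> ph C1 c = ph (init_conf P) c \<and> opn C1 c = opn (init_conf P) c"
    using one_write[OF r0 RD_init assms(1) ini, of v1] by (elim exE conjE) (rule that; assumption)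
  have p: "ph C1 (Wr i2) = Idle" "cst C1 (Wr i2) = cl_init P (Wr i2)" "opn C1 (Wr i2) = 0"
    using C1(4) assms(3) by (auto simp: init_conf_def)
  obtain C2 where C2: "reach S t W R P C2 (([] @ [InvW (Wr i1) v1, RespW (Wr i1)]) @ [InvW (Wr i2) v2, RespW (Wr i2)])" "RD C2"
     "\<forall>j. sst C2 j = (if j < S then fst (srv_step P j (sst C1 j) (Wr i2) (w_req P (Wr i2) (cl_init P (Wr i2)) v2 j)) else sst C1 j)"
    using one_write[OF C1(1,2) assms(2) p, of v2] by (elim exE conjE) (rule that; assumption)
  show ?thesis using C1(3) C2 by (intro exI[of _ C2]) (auto simp: init_conf_def)
qed

lemma seq12: "\<exists>C. reach S t W R P C [InvW (Wr 0) 1, RespW (Wr 0), InvW (Wr 1) 2, RespW (Wr 1)] \<and> RD C \<and> (\<forall>j. sst C j = pat 0 j)"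
  using seq_write[of 0 1 1 2] W2 unfolding pat_def AA_def M0_def M1_def by auto

lemma seq21: "\<exists>C. reach S t W R P C [InvW (Wr 1) 2, RespW (Wr 1), InvW (Wr 0) 1, RespW (Wr 0)] \<and> RD C \<and> (\<forall>j. sst C j = pat S j)"
  using seq_write[of 1 0 2 1] W2 unfolding pat_def BB_def M0_def M1_def by auto

lemma conc_write:
  assumes kS: "k \<le> S"
  shows "\<exists>C. reach S t W R P C [InvW (Wr 0) 1, InvW (Wr 1) 2, RespW (Wr 0), RespW (Wr 1)] \<and> RD C \<and> (\<forall>j. sst C j = pat k j)"
proof -
  have w01: "0 < W" "1 < W" using W2 by auto
  let ?I = "init_conf P"
  have r0: "reach S t W R P ?I []" by (rule reach.init)
  let ?C1 = "?I\<lparr> ph := (ph ?I)(Wr 0 := WPh 1), opn := (opn ?I)(Wr 0 := Suc (opn ?I (Wr 0))),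
           got := (got ?I)(Wr 0 := Map.empty),
           reqs := reqs ?I \<union> {(Wr 0, j, Suc (opn ?I (Wr 0)), 1, w_req P (Wr 0) (cst ?I (Wr 0)) 1 j) | j. j < S} \<rparr>"
  have r1: "reach S t W R P ?C1 ([] @ [InvW (Wr 0) 1])" using inv_w_step[OF r0 w01(1)] by (simp add: init_conf_def)
  let ?C2 = "?C1\<lparr> ph := (ph ?C1)(Wr 1 := WPh 2), opn := (opn ?C1)(Wr 1 := Suc (opn ?C1 (Wr 1))),
           got := (got ?C1)(Wr 1 := Map.empty),
           reqs := reqs ?C1 \<union> {(Wr 1, j, Suc (opn ?C1 (Wr 1)), 1, w_req P (Wr 1) (cst ?C1 (Wr 1)) 2 j) | j. j < S} \<rparr>"
  have r2: "reach S t W R P ?C2 ([InvW (Wr 0) 1] @ [InvW (Wr 1) 2])" using inv_w_step[OF r1 w01(2)] by (simp add: init_conf_def)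
  have C2f: "sst ?C2 = srv_init P" "ph ?C2 (Wr 0) = WPh 1" "ph ?C2 (Wr 1) = WPh 2" "opn ?C2 (Wr 0) = 1" "opn ?C2 (Wr 1) = 1"
    "got ?C2 (Wr 0) = Map.empty" "got ?C2 (Wr 1) = Map.empty"
    "\<forall>j<S. (Wr 0, j, 1, 1, M0 j) \<in> reqs ?C2" "\<forall>j<S. (Wr 1, j, 1, 1, M1 j) \<in> reqs ?C2" "RD ?C2"
    by (auto simp: init_conf_def M0_def M1_def RD_def)
  have rq3: "\<forall>j\<in>set [0..<k]. (Wr 1, j, 1, 1, M1 j) \<in> reqs ?C2" using C2f(9) kS by auto
  obtain C3 where C3: "reach S t W R P C3 [InvW (Wr 0) 1, InvW (Wr 1) 2]"
    "\<forall>j. sst C3 j = (if j \<in> set [0..<k] then fst (srv_step P j (sst ?C2 j) (Wr 1) (M1 j)) else sst ?C2 j)"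
    "\<forall>j\<in>set [0..<k]. (j,Wr 1,1,1,snd (srv_step P j (sst ?C2 j) (Wr 1) (M1 j))) \<in> reps C3" "reps ?C2 \<subseteq> reps C3"
    "\<forall>x\<in>reps C3. x \<in> reps ?C2 \<or> fst (snd x) = Wr 1"
    "reqs C3 \<subseteq> reqs ?C2" "\<forall>x\<in>reqs ?C2. fst x \<noteq> Wr 1 \<or> fst (snd x) \<notin> set [0..<k] \<longrightarrow> x \<in> reqs C3"
    "cst C3 = cst ?C2" "ph C3 = ph ?C2" "opn C3 = opn ?C2" "got C3 = got ?C2"
    using deliver_list[OF r2 distinct_upt rq3] by (elim exE conjE) (rule that; simp)
  have rq4: "\<forall>j\<in>set [0..<S]. (Wr 0, j, 1, 1, M0 j) \<in> reqs C3" using C2f(8) C3(7) by auto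
  obtain C4 where C4: "reach S t W R P C4 [InvW (Wr 0) 1, InvW (Wr 1) 2]"
    "\<forall>j. sst C4 j = (if j \<in> set [0..<S] then fst (srv_step P j (sst C3 j) (Wr 0) (M0 j)) else sst C3 j)"
    "\<forall>j\<in>set [0..<S]. (j,Wr 0,1,1,snd (srv_step P j (sst C3 j) (Wr 0) (M0 j))) \<in> reps C4" "reps C3 \<subseteq> reps C4"
    "\<forall>x\<in>reps C4. x \<in> reps C3 \<or> fst (snd x) = Wr 0"
    "reqs C4 \<subseteq> reqs C3" "\<forall>x\<in>reqs C3. fst x \<noteq> Wr 0 \<or> fst (snd x) \<notin> set [0..<S] \<longrightarrow> x \<in> reqs C4"
    "cst C4 = cst C3" "ph C4 = ph C3" "opn C4 = opn C3" "got C4 = got C3"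
    using deliver_list[OF C3(1) distinct_upt rq4] by (elim exE conjE) (rule that; assumption)
  have rq5: "\<forall>j\<in>set [k..<S]. (Wr 1, j, 1, 1, M1 j) \<in> reqs C4" using C2f(9) C3(7) C4(7) by auto
  obtain C5 where C5: "reach S t W R P C5 [InvW (Wr 0) 1, InvW (Wr 1) 2]"
    "\<forall>j. sst C5 j = (if j \<in> set [k..<S] then fst (srv_step P j (sst C4 j) (Wr 1) (M1 j)) else sst C4 j)"
    "\<forall>j\<in>set [k..<S]. (j,Wr 1,1,1,snd (srv_step P j (sst C4 j) (Wr 1) (M1 j))) \<in> reps C5" "reps C4 \<subseteq> reps C5"
    "\<forall>x\<in>reps C5. x \<in> reps C4 \<or> fst (snd x) = Wr 1"
    "reqs C5 \<subseteq> reqs C4" "\<forall>x\<in>reqs C4. fst x \<noteq> Wr 1 \<or> fst (snd x) \<notin> set [k..<S] \<longrightarrow> x \<in> reqs C5"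
    "cst C5 = cst C4" "ph C5 = ph C4" "opn C5 = opn C4" "got C5 = got C4"
    using deliver_list[OF C4(1) distinct_upt rq5] by (elim exE conjE) (rule that; assumption)
  have p5: "ph C5 (Wr 0) = WPh 1" "got C5 (Wr 0) = Map.empty" "opn C5 (Wr 0) = 1"
    "ph C5 (Wr 1) = WPh 2" "got C5 (Wr 1) = Map.empty" "opn C5 (Wr 1) = 1"
    using C5(9,10,11) C4(9,10,11) C3(9,10,11) C2f by auto
  have rp0: "\<forall>j<q. \<exists>m. (j, Wr 0, opn C5 (Wr 0), 1, m) \<in> reps C5" using C4(3) C5(4) p5(3) qS by fastforce
  obtain C6 where C6: "reach S t W R P C6 ([InvW (Wr 0) 1, InvW (Wr 1) 2] @ [RespW (Wr 0)])" "sst C6 = sst C5" "reqs C6 = reqs C5"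
     "reps C6 \<subseteq> reps C5" "\<forall>x\<in>reps C5. fst (snd x) \<noteq> Wr 0 \<longrightarrow> x \<in> reps C6"
     "ph C6 = (ph C5)(Wr 0 := Idle)" "opn C6 = opn C5" "\<forall>c'. c' \<noteq> Wr 0 \<longrightarrow> cst C6 c' = cst C5 c' \<and> got C6 c' = got C5 c'"
    using collect_done[OF C5(1) p5(1,2) rp0] by (elim exE conjE) (rule that; assumption)
  have p6: "ph C6 (Wr 1) = WPh 2" "got C6 (Wr 1) = Map.empty" "opn C6 (Wr 1) = 1" using C6(6,7,8) p5 by auto
  have rp1: "\<forall>j<q. \<exists>m. (j, Wr 1, opn C6 (Wr 1), 1, m) \<in> reps C6"
  proof (intro allI impI)
    fix j assume j: "j < q"
    then have jS: "j < S" using qS by simp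
    show "\<exists>m. (j, Wr 1, opn C6 (Wr 1), 1, m) \<in> reps C6"
    proof (cases "j < k")
      case True
      then have "\<exists>m. (j, Wr 1, 1, 1, m) \<in> reps C3" using C3(3) by auto
      then have "\<exists>m. (j, Wr 1, 1, 1, m) \<in> reps C5" using C4(4) C5(4) by blast
      then show ?thesis using C6(5) p6(3) by auto
    next
      case False
      then have "\<exists>m. (j, Wr 1, 1, 1, m) \<in> reps C5" using C5(3) jS by auto
      then show ?thesis using C6(5) p6(3) by auto
    qed
  qed
  obtain C7 where C7: "reach S t W R P C7 (([InvW (Wr 0) 1, InvW (Wr 1) 2] @ [RespW (Wr 0)]) @ [RespW (Wr 1)])" "sst C7 = sst C6" "reqs C7 = reqs C6"
     "reps C7 \<subseteq> reps C6" "\<forall>x\<in>reps C6. fst (snd x) \<noteq> Wr 1 \<longrightarrow> x \<in> reps C7"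
     "ph C7 = (ph C6)(Wr 1 := Idle)" "opn C7 = opn C6" "\<forall>c'. c' \<noteq> Wr 1 \<longrightarrow> cst C7 c' = cst C6 c' \<and> got C7 c' = got C6 c'"
    using collect_done[OF C6(1) p6(1,2) rp1] by (elim exE conjE) (rule that; assumption)
  have RD3: "RD C3" using RD_frame[OF C2f(10), of "Wr 1" C3] C3(6,5,8,9,10,11) by auto
  have RD4: "RD C4" using RD_frame[OF RD3, of "Wr 0" C4] C4(6,5,8,9,10,11) by auto
  have RD5: "RD C5" using RD_frame[OF RD4, of "Wr 1" C5] C5(6,5,8,9,10,11) by auto
  have RD6: "RD C6" using RD_frame[OF RD5, of "Wr 0" C6] C6(3,4,6,7,8) by auto
  have RD7: "RD C7" using RD_frame[OF RD6, of "Wr 1" C7] C7(3,4,6,7,8) by auto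
  have "sst C7 j = pat k j" for j
  proof -
    have "sst C7 j = sst C5 j" using C7(2) C6(2) by simp
    then show ?thesis using C5(2) C4(2) C3(2) C2f(1) kS unfolding pat_def AA_def BB_def by auto
  qed
  then show ?thesis using C7(1) RD7 by (intro exI[of _ C7]) simp
qed

definition RS :: "('c, 's, 'm) conf \<Rightarrow> client \<Rightarrow> bool" where
  "RS C c \<longleftrightarrow> cst C c = cl_init P c \<and> ph C c = RPh1 \<and> opn C c = 1 \<and> got C c = Map.empty
     \<and> (\<forall>j k r m. (c,j,k,r,m) \<in> reqs C \<longleftrightarrow> j < S \<and> k = 1 \<and> r = 1 \<and> m = r_req1 P c (cl_init P c) j)
     \<and> (\<forall>j k r m. (j,c,k,r,m) \<notin> reps C)"

lemma readers_inv:
  assumes "reach S t W R P C h" "RD C"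
  shows "\<exists>C'. reach S t W R P C' (h @ [InvR (Rd 0), InvR (Rd 1)]) \<and> sst C' = sst C \<and> RS C' (Rd 0) \<and> RS C' (Rd 1)"
proof -
  have r01: "0 < R" "1 < R" using R2 by auto
  have i0: "ph C (Rd 0) = Idle" using assms(2) unfolding RD_def by blast
  let ?C1 = "C\<lparr> ph := (ph C)(Rd 0 := RPh1), opn := (opn C)(Rd 0 := Suc (opn C (Rd 0))),
           got := (got C)(Rd 0 := Map.empty),
           reqs := reqs C \<union> {(Rd 0, j, Suc (opn C (Rd 0)), 1, r_req1 P (Rd 0) (cst C (Rd 0)) j) | j. j < S} \<rparr>"
  have r1: "reach S t W R P ?C1 (h @ [InvR (Rd 0)])" using reach.inv_r[OF assms(1) r01(1) i0] .
  have i1: "ph ?C1 (Rd 1) = Idle" using assms(2) unfolding RD_def by simp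
  let ?C2 = "?C1\<lparr> ph := (ph ?C1)(Rd 1 := RPh1), opn := (opn ?C1)(Rd 1 := Suc (opn ?C1 (Rd 1))),
           got := (got ?C1)(Rd 1 := Map.empty),
           reqs := reqs ?C1 \<union> {(Rd 1, j, Suc (opn ?C1 (Rd 1)), 1, r_req1 P (Rd 1) (cst ?C1 (Rd 1)) j) | j. j < S} \<rparr>"
  have r2: "reach S t W R P ?C2 ((h @ [InvR (Rd 0)]) @ [InvR (Rd 1)])" using reach.inv_r[OF r1 r01(2) i1] .
  have d: "\<forall>i. cst C (Rd i) = cl_init P (Rd i) \<and> ph C (Rd i) = Idle \<and> opn C (Rd i) = 0 \<and> got C (Rd i) = Map.empty
     \<and> (\<forall>j k r m. (Rd i,j,k,r,m) \<notin> reqs C \<and> (j,Rd i,k,r,m) \<notin> reps C)" using assms(2) unfolding RD_def .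
  have "RS ?C2 (Rd 0)" "RS ?C2 (Rd 1)" using d unfolding RS_def by auto
  then show ?thesis using r2 by (intro exI[of _ ?C2]) simp
qed

end


context ctx begin

lemma UI_base:
  assumes "reach S t W R P B hb" "RS B (Rd 0)" "RS B (Rd 1)"
  shows "UI hb B hb"
proof -
  have iv: "INV B c" if "rdr c" for c
  proof -
    have rs: "RS B c" using that assms(2,3) unfolding rdr_def by auto
    then show ?thesis unfolding INV_def RS_def by auto
  qed
  have "\<forall>c. rdr c \<longrightarrow> (ph B c = Idle \<longleftrightarrow> (\<exists>u. RespR c u \<in> set []))"
    using assms(2,3) unfolding rdr_def RS_def by auto
  then show ?thesis unfolding UI_def using assms(1) iv by (intro conjI exI[of _ "[]"]) (auto simp: shp_def)
qed

lemma sim_base: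
  assumes "RS B (Rd 0)" "RS B' (Rd 0)" "\<forall>j. j \<noteq> k \<longrightarrow> sst B j = sst B' j"
  shows "sim (Rd 0) {k} B B'"
  using assms unfolding sim_def RS_def by auto

definition hbk :: "nat \<Rightarrow> event list" where
  "hbk k = (if k = 0 then hb12 else if k = S then hb21 else hbc)"

lemma Agr_hbk: "Agr (hbk k)"
  unfolding hbk_def using Agr_hb12 Agr_hb21 Agr_hbc by auto

lemma bases:
  assumes "k \<le> S"
  shows "\<exists>B. UI (hbk k) B (hbk k) \<and> (\<forall>j. sst B j = pat k j) \<and> RS B (Rd 0) \<and> RS B (Rd 1)"
proof -
  obtain C hw where C: "reach S t W R P C hw" "RD C" "\<forall>j. sst C j = pat k j" "hw @ [InvR (Rd 0), InvR (Rd 1)] = hbk k"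
  proof (cases "k = 0")
    case True
    then show ?thesis using seq12 that unfolding hbk_def hb12_def by auto
  next
    case False
    show ?thesis
    proof (cases "k = S")
      case True
      then show ?thesis using seq21 that False unfolding hbk_def hb21_def by auto
    next
      case False2: False
      then show ?thesis using conc_write[OF assms] that False unfolding hbk_def hbc_def by auto
    qed
  qed
  obtain B where B: "reach S t W R P B (hw @ [InvR (Rd 0), InvR (Rd 1)])" "sst B = sst C" "RS B (Rd 0)" "RS B (Rd 1)"
    using readers_inv[OF C(1,2)] by blast
  show ?thesis using UI_base[OF B(1) B(3,4)] B C(3,4) by auto
qed

lemma chain:
  assumes "k \<le> S" "UI (hbk k) B (hbk k)" "\<forall>j. sst B j = pat k j" "RS B (Rd 0)"
  shows "2 \<in> Out B (hbk k)"
  using assms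
proof (induction k arbitrary: B)
  case 0
  have pend: "ph B (Rd 0) \<noteq> Idle" using 0(4) unfolding RS_def by simp
  obtain ls C' os u where r: "urun B ls C' os" "RespR (Rd 0) u \<in> set os"
    using solo[OF 0(2) _ pend, of "{}" 0] by (auto simp: rdr_def)
  have U: "UI hb12 C' (hb12 @ os)" using urun_UI[OF r(1)] 0(2) unfolding hbk_def by simp
  have "u = 2" using forced12[OF U, of "Rd 0" u] r(2) by simp
  then show ?case using r unfolding Out_def by fastforce
next
  case (Suc k)
  have kS: "k \<le> S" using Suc.prems(1) by simp
  obtain B' where B': "UI (hbk k) B' (hbk k)" "\<forall>j. sst B' j = pat k j" "RS B' (Rd 0)" "RS B' (Rd 1)"
    using bases[OF kS] by blast
  have two: "2 \<in> Out B' (hbk k)" using Suc.IH[OF kS B'(1,2,3)] .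
  have "\<forall>j. j \<noteq> k \<longrightarrow> sst B' j = sst B j" using B'(2) Suc.prems(3) unfolding pat_def by auto
  then have sm: "sim (Rd 0) {k} B' B" using sim_base[OF B'(3) Suc.prems(4)] by blast
  have pend: "ph B' (Rd 0) \<noteq> Idle" using B'(3) unfolding RS_def by simp
  obtain ls C' os w where r: "urun B' ls C' os" "\<forall>l\<in>set ls. lcl l = Rd 0 \<and> avoids {k} l" "RespR (Rd 0) w \<in> set os"
    using solo[OF B'(1) _ pend, of "{k}" k] by (auto simp: rdr_def)
  obtain C'' where r2: "urun B ls C'' os" using urun_sim[OF r(1,2) sm] by blast
  have w1: "w \<in> Out B' (hbk k)" using r unfolding Out_def by fastforce
  have w2: "w \<in> Out B (hbk (Suc k))" using r2 r(3) unfolding Out_def by fastforce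
  have "\<not> Biv B' (hbk k)" using noBiv[OF B'(1) Agr_hbk] .
  then have "w = 2" using w1 two unfolding Biv_def by blast
  then show ?case using w2 by simp
qed

lemma final: False
proof -
  obtain B where B: "UI (hbk S) B (hbk S)" "\<forall>j. sst B j = pat S j" "RS B (Rd 0)" "RS B (Rd 1)"
    using bases[of S] by blast
  have "2 \<in> Out B (hbk S)" using chain[OF le_refl B(1,2,3)] .
  then obtain ls C' os c where r: "urun B ls C' os" "RespR c 2 \<in> set (hbk S @ os)" unfolding Out_def by blast
  have hS: "hbk S = hb21" using S2 unfolding hbk_def by simp
  have U: "UI hb21 C' (hb21 @ os)" using urun_UI[OF r(1)] B(1) hS by simp
  show False using forced21[OF U] r(2) hS by fastforce
qed

end

theorem theorem1:
  fixes P :: "('c, 's, 'm) proto" and S t W R :: nat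
  assumes "S \<ge> 2" and "t \<ge> 1" and "W \<ge> 2" and "R \<ge> 2"
  shows "\<exists>C h. reach S t W R P C h \<and> \<not> atomic h"
proof (rule ccontr)
  assume "\<not> ?thesis"
  then have at: "\<And>C h. reach S t W R P C h \<Longrightarrow> atomic h" by blast
  interpret ctx S t W R P using assms at by unfold_locales auto
  show False by (rule final)
qed


end
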